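(* For every integer $n \geq 6$, $$\gamma_{b,2}(C_6 \square C_n) = n + \begin{cases} 0 & \text{if } n \equiv 0 \pmod 4,\\ 1 & \text{if } n \equiv 1, 2, \text{ or } 3 \pmod 4.\end{cases}$$
   Context: For a graph $G$, a $2$-limited broadcast is a function $f: V(G) \to \{0,1,2\}$. A vertex $u$ hears the broadcast from $v$ if $f(v) > 0$ and $d(u,v) \leq f(v)$, where $d$ is the distance in $G$. The broadcast $f$ is dominating if every vertex of $G$ hears the broadcast from some vertex. The cost of $f$ is $\sum_{v \in V(G)} f(v)$. The $2$-limited broadcast domination number $\gamma_{b,2}(G)$ is the minimum cost of a $2$-limited dominating broadcast on $G$. $C_n$ denotes the cycle on $n$ vertices and $\square$ the Cartesian product of graphs. *)

theory Defs
  imports Main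
begin

inductive walk :: "'a set \<Rightarrow> ('a \<Rightarrow> 'a \<Rightarrow> bool) \<Rightarrow> 'a \<Rightarrow> 'a \<Rightarrow> nat \<Rightarrow> bool"
  for V E where
  walk_refl: "u \<in> V \<Longrightarrow> walk V E u u 0"
| walk_step: "u \<in> V \<Longrightarrow> E u w \<Longrightarrow> walk V E w v k \<Longrightarrow> walk V E u v (Suc k)"

(* graph distance: length of a shortest walk (only used for connected graphs) *)
definition gdist :: "'a set \<Rightarrow> ('a \<Rightarrow> 'a \<Rightarrow> bool) \<Rightarrow> 'a \<Rightarrow> 'a \<Rightarrow> nat" where
  "gdist V E u v = (LEAST k. walk V E u v k)"

definition cycle_adj :: "nat \<Rightarrow> nat \<Rightarrow> nat \<Rightarrow> bool" where
  "cycle_adj n i j \<longleftrightarrow> i < n \<and> j < n \<and> (j = (i + 1) mod n \<or> i = (j + 1) mod n) \<and> i \<noteq> j"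

definition cart_adj :: "('a \<Rightarrow> 'a \<Rightarrow> bool) \<Rightarrow> ('b \<Rightarrow> 'b \<Rightarrow> bool) \<Rightarrow> ('a \<times> 'b) \<Rightarrow> ('a \<times> 'b) \<Rightarrow> bool" where
  "cart_adj E1 E2 x y \<longleftrightarrow> (fst x = fst y \<and> E2 (snd x) (snd y)) \<or> (snd x = snd y \<and> E1 (fst x) (fst y))"

definition dom_broadcast2 :: "'a set \<Rightarrow> ('a \<Rightarrow> 'a \<Rightarrow> bool) \<Rightarrow> ('a \<Rightarrow> nat) \<Rightarrow> bool" where
  "dom_broadcast2 V E f \<longleftrightarrow> (\<forall>v\<in>V. f v \<le> 2) \<and>
     (\<forall>u\<in>V. \<exists>v\<in>V. f v > 0 \<and> gdist V E u v \<le> f v)"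

definition bcost :: "'a set \<Rightarrow> ('a \<Rightarrow> nat) \<Rightarrow> nat" where
  "bcost V f = (\<Sum>v\<in>V. f v)"

definition gamma_b2 :: "'a set \<Rightarrow> ('a \<Rightarrow> 'a \<Rightarrow> bool) \<Rightarrow> nat" where
  "gamma_b2 V E = (LEAST c. \<exists>f. dom_broadcast2 V E f \<and> bcost V f = c)"

definition torus_V :: "nat \<Rightarrow> nat \<Rightarrow> (nat \<times> nat) set" where
  "torus_V m n = {0..<m} \<times> {0..<n}"

definition torus_E :: "nat \<Rightarrow> nat \<Rightarrow> (nat \<times> nat) \<Rightarrow> (nat \<times> nat) \<Rightarrow> bool" where
  "torus_E m n = cart_adj (cycle_adj m) (cycle_adj n)"

end

theory Submission
  imports Defs
begin



lemma walk_in: "walk V E u v k \<Longrightarrow> u \<in> V \<and> v \<in> V"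
  by (induction rule: walk.induct) auto

lemma walk_append: "walk V E u w k1 \<Longrightarrow> walk V E w v k2 \<Longrightarrow> walk V E u v (k1 + k2)"
  by (induction rule: walk.induct) (auto intro: walk.intros)

lemma walk_one: "u \<in> V \<Longrightarrow> w \<in> V \<Longrightarrow> E u w \<Longrightarrow> walk V E u w 1"
  using walk_step[OF _ _ walk_refl] by fastforce

lemma walk_sym:
  assumes sym: "\<And>x y. E x y \<Longrightarrow> E y x"
  shows "walk V E u v k \<Longrightarrow> walk V E v u k"
proof (induction rule: walk.induct)
  case (walk_refl u) then show ?case by (rule walk.walk_refl)
next
  case (walk_step u w v k)
  have "w \<in> V" using walk_in[OF walk_step(3)] by simp
  have "walk V E w u 1" using walk_one[of w V u E] \<open>w \<in> V\<close> walk_step(1) sym[OF walk_step(2)] by blast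
  from walk_append[OF walk_step(4) this] show ?case by simp
qed

definition near :: "nat \<Rightarrow> nat \<Rightarrow> nat \<Rightarrow> nat \<Rightarrow> bool" where
  "near m k a b \<longleftrightarrow> (\<exists>t\<le>k. (a + t) mod m = b \<or> (b + t) mod m = a)"

lemma near_mono: "near m k a b \<Longrightarrow> k \<le> k' \<Longrightarrow> near m k' a b"
proof -
  assume "near m k a b" "k \<le> k'"
  then obtain t where "t \<le> k" "(a + t) mod m = b \<or> (b + t) mod m = a" unfolding near_def by blast
  then show ?thesis unfolding near_def using \<open>k \<le> k'\<close> by (intro exI[of _ t]) auto
qed

lemma near_sym: "near m k a b \<Longrightarrow> near m k b a"
  unfolding near_def by blast

lemma suc_mod_cancel: "Suc a mod m = Suc b mod m \<Longrightarrow> a mod m = b mod m"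
proof (cases "a \<le> b")
  case True
  assume h: "Suc a mod m = Suc b mod m"
  then have "m dvd Suc b - Suc a" using mod_eq_dvd_iff_nat[of "Suc a" "Suc b" m] True by simp
  then have "m dvd b - a" by simp
  then show ?thesis using mod_eq_dvd_iff_nat[of a b m] True by simp
next
  case False
  assume h: "Suc a mod m = Suc b mod m"
  then have "m dvd Suc a - Suc b" using mod_eq_dvd_iff_nat[of "Suc b" "Suc a" m] False by simp
  then have "m dvd a - b" by simp
  then show ?thesis using mod_eq_dvd_iff_nat[of b a m] False by simp
qed

lemma near_step:
  assumes "cycle_adj m x y" "near m k y z" "z < m"
  shows "near m (Suc k) x z"
proof -
  from assms(1) have xm: "x < m" and ym: "y < m" and ad: "y = (x + 1) mod m \<or> x = (y + 1) mod m"
    unfolding cycle_adj_def by auto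
  from assms(2) obtain t where t: "t \<le> k" and h: "(y + t) mod m = z \<or> (z + t) mod m = y"
    unfolding near_def by blast
  show ?thesis
  proof (cases "y = (x + 1) mod m")
    case True
    note yx = True
    show ?thesis
    proof (cases "(y + t) mod m = z")
      case True
      then have "(x + Suc t) mod m = z" using yx by (simp add: mod_add_left_eq)
      then show ?thesis unfolding near_def using t by (intro exI[of _ "Suc t"]) auto
    next
      case False
      then have zt: "(z + t) mod m = y" using h by blast
      show ?thesis
      proof (cases t)
        case 0
        then have "z = y" using zt assms(3) by simp
        then have "(x + 1) mod m = z" using yx by simp
        then show ?thesis unfolding near_def by (intro exI[of _ 1]) auto
      next
        case (Suc s)
        have "Suc (z + s) mod m = Suc x mod m" using zt yx Suc by simp
        then have "(z + s) mod m = x mod m" by (rule suc_mod_cancel)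
        then have "(z + s) mod m = x" using xm by simp
        then show ?thesis unfolding near_def using Suc t by (intro exI[of _ s]) auto
      qed
    qed
  next
    case False
    then have xy: "x = (y + 1) mod m" using ad by blast
    show ?thesis
    proof (cases "(z + t) mod m = y")
      case True
      have "(z + Suc t) mod m = Suc ((z + t) mod m) mod m" by (simp add: mod_Suc_eq)
      then have "(z + Suc t) mod m = x" using xy True by simp
      then show ?thesis unfolding near_def using t by (intro exI[of _ "Suc t"]) auto
    next
      case False
      then have yt: "(y + t) mod m = z" using h by blast
      show ?thesis
      proof (cases t)
        case 0
        then have "y = z" using yt ym by simp
        then have "(z + 1) mod m = x" using xy by simp
        then show ?thesis unfolding near_def by (intro exI[of _ 1]) auto
      next
        case (Suc s)
        have "(x + s) mod m = (y + 1 + s) mod m" using xy by (simp add: mod_add_left_eq)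
        also have "\<dots> = z" using yt Suc by simp
        finally show ?thesis unfolding near_def using Suc t by (intro exI[of _ s]) auto
      qed
    qed
  qed
qed



lemma cycle_adj_sym: "cycle_adj m x y \<Longrightarrow> cycle_adj m y x"
  unfolding cycle_adj_def by auto

lemma torus_E_iff: "torus_E m n (a,b) (c,d) \<longleftrightarrow> (a = c \<and> cycle_adj n b d) \<or> (b = d \<and> cycle_adj m a c)"
  unfolding torus_E_def cart_adj_def by auto

lemma torus_E_sym: "torus_E m n x y \<Longrightarrow> torus_E m n y x"
  unfolding torus_E_def cart_adj_def using cycle_adj_sym by metis

lemma torus_walk_sym: assumes "walk (torus_V m n) (torus_E m n) u v k"
  shows "walk (torus_V m n) (torus_E m n) v u k"
  by (rule walk_sym[OF _ assms]) (erule torus_E_sym)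

lemma torus_V_iff: "(a,b) \<in> torus_V m n \<longleftrightarrow> a < m \<and> b < n"
  unfolding torus_V_def by auto

lemma near_refl: "a < m \<Longrightarrow> near m 0 a a"
  unfolding near_def by (intro exI[of _ 0]) simp

lemma walk_near:
  "walk (torus_V m n) (torus_E m n) u v k \<Longrightarrow>
    \<exists>k1 k2. k1 + k2 \<le> k \<and> near m k1 (fst u) (fst v) \<and> near n k2 (snd u) (snd v)"
proof (induction rule: walk.induct)
  case (walk_refl u)
  then show ?case by (cases u) (auto simp: torus_V_iff intro!: near_refl)
next
  case (walk_step u w v k)
  obtain k1 k2 where kk: "k1 + k2 \<le> k" "near m k1 (fst w) (fst v)" "near n k2 (snd w) (snd v)"
    using walk_step.IH by blast
  have vV: "v \<in> torus_V m n" using walk_in[OF walk_step(3)] by simp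
  obtain a b where u: "u = (a,b)" by (cases u)
  obtain c d where w: "w = (c,d)" by (cases w)
  obtain e g where v: "v = (e,g)" by (cases v)
  have em: "e < m" and gn: "g < n" using vV v torus_V_iff by auto
  from walk_step(2) u w have "(a = c \<and> cycle_adj n b d) \<or> (b = d \<and> cycle_adj m a c)"
    using torus_E_iff by simp
  then show ?case
  proof
    assume h: "a = c \<and> cycle_adj n b d"
    have "near n (Suc k2) b g" using near_step[of n b d k2 g] h kk(3) w v gn by simp
    then show ?thesis using kk u w v h by (intro exI[of _ k1] exI[of _ "Suc k2"]) auto
  next
    assume h: "b = d \<and> cycle_adj m a c"
    have "near m (Suc k1) a e" using near_step[of m a c k1 e] h kk(2) w v em by simp
    then show ?thesis using kk u w v h by (intro exI[of _ "Suc k1"] exI[of _ k2]) auto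
  qed
qed

lemma cycle_adj_succ: "2 < m \<Longrightarrow> a < m \<Longrightarrow> cycle_adj m a ((a + 1) mod m)"
  unfolding cycle_adj_def
proof (intro conjI)
  assume "2 < m" "a < m"
  show "a \<noteq> (a + 1) mod m"
  proof (cases "a + 1 < m")
    case True then show ?thesis by simp
  next
    case False then have "a + 1 = m" using \<open>a < m\<close> by simp
    then show ?thesis using \<open>2 < m\<close> by simp
  qed
qed auto

lemma row_walk: "2 < m \<Longrightarrow> b < n \<Longrightarrow> a < m \<Longrightarrow>
   walk (torus_V m n) (torus_E m n) (a,b) ((a + t) mod m, b) t"
proof (induction t arbitrary: a)
  case 0 then show ?case by (simp add: walk_refl torus_V_iff)
next
  case (Suc t)
  have a1: "(a + 1) mod m < m" using Suc.prems by simp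
  have "walk (torus_V m n) (torus_E m n) ((a+1) mod m, b) (((a + 1) mod m + t) mod m, b) t"
    using Suc.IH[OF Suc.prems(1,2) a1] .
  moreover have "((a + 1) mod m + t) mod m = (a + Suc t) mod m" by (simp add: mod_add_left_eq)
  moreover have "torus_E m n (a,b) ((a+1) mod m, b)"
    using torus_E_iff cycle_adj_succ Suc.prems by simp
  ultimately show ?case using Suc.prems walk_step[of "(a,b)" "torus_V m n" "torus_E m n" "((a+1) mod m, b)"]
    by (simp add: torus_V_iff)
qed

lemma col_walk: "2 < n \<Longrightarrow> a < m \<Longrightarrow> b < n \<Longrightarrow>
   walk (torus_V m n) (torus_E m n) (a,b) (a, (b + t) mod n) t"
proof (induction t arbitrary: b)
  case 0 then show ?case by (simp add: walk_refl torus_V_iff)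
next
  case (Suc t)
  have b1: "(b + 1) mod n < n" using Suc.prems by simp
  have "walk (torus_V m n) (torus_E m n) (a, (b+1) mod n) (a, ((b + 1) mod n + t) mod n) t"
    using Suc.IH[OF Suc.prems(1,2) b1] .
  moreover have "((b + 1) mod n + t) mod n = (b + Suc t) mod n" by (simp add: mod_add_left_eq)
  moreover have "torus_E m n (a,b) (a, (b+1) mod n)"
    using torus_E_iff cycle_adj_succ Suc.prems by simp
  ultimately show ?case using Suc.prems walk_step[of "(a,b)" "torus_V m n" "torus_E m n" "(a, (b+1) mod n)"]
    by (simp add: torus_V_iff)
qed

lemma near_row_walk:
  assumes "2 < m" "b < n" "a < m" "a' < m" "near m k a a'"
  shows "\<exists>t\<le>k. walk (torus_V m n) (torus_E m n) (a,b) (a',b) t"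
proof -
  obtain t where t: "t \<le> k" "(a + t) mod m = a' \<or> (a' + t) mod m = a" using assms(5) near_def by blast
  show ?thesis
  proof (cases "(a + t) mod m = a'")
    case True
    then show ?thesis using row_walk[OF assms(1,2,3), of t] t(1) by auto
  next
    case False
    then have "(a' + t) mod m = a" using t by blast
    then have "walk (torus_V m n) (torus_E m n) (a',b) (a,b) t" using row_walk[OF assms(1,2,4), of t] by simp
    then have "walk (torus_V m n) (torus_E m n) (a,b) (a',b) t" by (rule torus_walk_sym)
    then show ?thesis using t by blast
  qed
qed

lemma near_col_walk:
  assumes "2 < n" "a < m" "b < n" "b' < n" "near n k b b'"
  shows "\<exists>t\<le>k. walk (torus_V m n) (torus_E m n) (a,b) (a,b') t"
proof -
  obtain t where t: "t \<le> k" "(b + t) mod n = b' \<or> (b' + t) mod n = b" using assms(5) near_def by blast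
  show ?thesis
  proof (cases "(b + t) mod n = b'")
    case True
    then show ?thesis using col_walk[OF assms(1,2,3), of t] t(1) by auto
  next
    case False
    then have "(b' + t) mod n = b" using t by blast
    then have "walk (torus_V m n) (torus_E m n) (a,b') (a,b) t" using col_walk[OF assms(1,2,4), of t] by simp
    then have "walk (torus_V m n) (torus_E m n) (a,b) (a,b') t" by (rule torus_walk_sym)
    then show ?thesis using t by blast
  qed
qed

lemma near_full: "a < m \<Longrightarrow> b < m \<Longrightarrow> near m m a b"
  unfolding near_def
proof (intro exI[of _ "(b + m - a) mod m"] conjI)
  assume "a < m" "b < m"
  show "(b + m - a) mod m \<le> m" using \<open>a < m\<close> by (simp add: less_imp_le)
  have "(a + (b + m - a) mod m) mod m = (a + (b + m - a)) mod m" by (simp add: mod_add_right_eq)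
  also have "a + (b + m - a) = b + m" using \<open>a < m\<close> by simp
  finally show "(a + (b + m - a) mod m) mod m = b \<or> (b + (b + m - a) mod m) mod m = a" using \<open>b < m\<close> by simp
qed

lemma gdist_le_iff:
  assumes m: "2 < m" and n: "2 < n" and u: "u \<in> torus_V m n" and v: "v \<in> torus_V m n"
  shows "gdist (torus_V m n) (torus_E m n) u v \<le> r \<longleftrightarrow>
     (\<exists>k1 k2. k1 + k2 \<le> r \<and> near m k1 (fst u) (fst v) \<and> near n k2 (snd u) (snd v))"
proof -
  obtain a b where ab: "u = (a,b)" by (cases u)
  obtain c d where cd: "v = (c,d)" by (cases v)
  have am: "a < m" "b < n" "c < m" "d < n" using u v ab cd torus_V_iff by auto
  let ?V = "torus_V m n" and ?E = "torus_E m n"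
  have walks: "\<exists>t. t \<le> k1 + k2 \<and> walk ?V ?E u v t" if nr1: "near m k1 a c" and nr2: "near n k2 b d" for k1 k2
  proof -
    obtain t1 where t1: "t1 \<le> k1" "walk ?V ?E (a,b) (c,b) t1" using near_row_walk[OF m am(2,1,3) nr1] by blast
    obtain t2 where t2: "t2 \<le> k2" "walk ?V ?E (c,b) (c,d) t2" using near_col_walk[OF n am(3,2,4) nr2] by blast
    show ?thesis using walk_append[OF t1(2) t2(2)] t1 t2 ab cd by (intro exI[of _ "t1+t2"]) auto
  qed
  have ex: "\<exists>t. walk ?V ?E u v t" using walks[OF near_full[OF am(1,3)] near_full[OF am(2,4)]] by blast
  show ?thesis
  proof
    assume r: "gdist ?V ?E u v \<le> r"
    have w: "walk ?V ?E u v (gdist ?V ?E u v)" unfolding gdist_def using ex by (rule LeastI_ex)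
    obtain k1 k2 where "k1 + k2 \<le> gdist ?V ?E u v" "near m k1 (fst u) (fst v)" "near n k2 (snd u) (snd v)"
      using walk_near[OF w] by blast
    then show "\<exists>k1 k2. k1 + k2 \<le> r \<and> near m k1 (fst u) (fst v) \<and> near n k2 (snd u) (snd v)"
      using r by (intro exI[of _ k1] exI[of _ k2]) auto
  next
    assume "\<exists>k1 k2. k1 + k2 \<le> r \<and> near m k1 (fst u) (fst v) \<and> near n k2 (snd u) (snd v)"
    then obtain k1 k2 where k: "k1 + k2 \<le> r" "near m k1 a c" "near n k2 b d" using ab cd by auto
    obtain t where "t \<le> k1 + k2" "walk ?V ?E u v t" using walks[OF k(2,3)] by blast
    then have "gdist ?V ?E u v \<le> t" unfolding gdist_def by (simp add: Least_le)
    then show "gdist ?V ?E u v \<le> r" using \<open>t \<le> k1 + k2\<close> k(1) by simp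
  qed
qed




lemma near_0: "near m 0 a b \<longleftrightarrow> a mod m = b \<or> b mod m = a"
  unfolding near_def by auto

lemma near_Suc: "near m (Suc k) a b \<longleftrightarrow> near m k a b \<or> (a + Suc k) mod m = b \<or> (b + Suc k) mod m = a"
  unfolding near_def by (auto simp: le_Suc_eq)

lemma less6: "(a::nat) < 6 \<Longrightarrow> a = 0 \<or> a = 1 \<or> a = 2 \<or> a = 3 \<or> a = 4 \<or> a = 5" by arith

lemma row_fact1: "a < 6 \<Longrightarrow> r = 0 \<or> r = 3 \<Longrightarrow> near 6 1 a r \<or> near 6 1 a (3 - r)"
  using less6[of a] by (auto simp: near_Suc[of _ 0, simplified] near_0)

lemma row_fact2: "a < 6 \<Longrightarrow> r = 0 \<or> r = 3 \<Longrightarrow> near 6 2 a r \<or> a = 3 - r"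
  using less6[of a] by (auto simp: numeral_2_eq_2 near_Suc near_0)

lemma row_fact3: "a < 6 \<Longrightarrow> near 6 1 a 0 \<or> near 6 1 a 3"
  using row_fact1[of a 0] by simp


definition rw :: "nat \<Rightarrow> nat" where "rw j = 3 * ((j div 2) mod 2)"

definition fub :: "nat \<Rightarrow> nat \<times> nat \<Rightarrow> nat" where
  "fub n v = (if snd v < n \<and> even (snd v) \<and> fst v = rw (snd v) then 2 else 0)
            + (if n mod 4 = 2 \<and> snd v = n - 1 \<and> fst v = 3 then 1 else 0)"

lemma rw_cases: "rw j = 0 \<or> rw j = 3"
  unfolding rw_def by auto

lemma rw_lt: "rw j < 6"
  using rw_cases[of j] by auto

lemma rw_next: "rw (j + 2) = 3 - rw j"
  unfolding rw_def
proof -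
  have "(j + 2) div 2 = Suc (j div 2)" by simp
  moreover have "Suc q mod 2 = 1 - q mod 2" for q :: nat by (cases "even q") (auto simp: odd_iff_mod_2_eq_one)
  ultimately show "3 * ((j + 2) div 2 mod 2) = 3 - 3 * (j div 2 mod 2)" by simp
qed

lemma near_n_plus: "b + t < n \<Longrightarrow> near n t b (b + t)"
  unfolding near_def by (intro exI[of _ t]) simp

lemma near_n_minus: "t \<le> b \<Longrightarrow> b < n \<Longrightarrow> near n t b (b - t)"
  unfolding near_def by (intro exI[of _ t]) simp

lemma near_n_wrap: "0 < n \<Longrightarrow> near n 1 (n - 1) 0"
  unfolding near_def by (intro exI[of _ 1]) simp

lemma fub_le2: "fub n v \<le> 2"
proof -
  have "\<not> (even (snd v) \<and> n mod 4 = 2 \<and> snd v = n - 1 \<and> snd v < n)"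
  proof
    assume h: "even (snd v) \<and> n mod 4 = 2 \<and> snd v = n - 1 \<and> snd v < n"
    then show False by presburger
  qed
  then show ?thesis unfolding fub_def by auto
qed

lemma cover_intro: "v \<in> torus_V 6 n \<Longrightarrow> fub n v > 0 \<Longrightarrow> p + q \<le> fub n v \<Longrightarrow>
  near 6 p a (fst v) \<Longrightarrow> near n q b (snd v) \<Longrightarrow> \<exists>v\<in>torus_V 6 n. fub n v > 0 \<and>
     (\<exists>k1 k2. k1 + k2 \<le> fub n v \<and> near 6 k1 a (fst v) \<and> near n k2 b (snd v))"
  by blast

lemma fub_cover:
  assumes n: "6 \<le> n" and a: "a < 6" and b: "b < n"
  shows "\<exists>v\<in>torus_V 6 n. fub n v > 0 \<and>
     (\<exists>k1 k2. k1 + k2 \<le> fub n v \<and> near 6 k1 a (fst v) \<and> near n k2 b (snd v))"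
proof (cases "even b")
  case True
  have src: "fub n (rw j, j) \<ge> 2" if "j < n" "even j" for j
    using that unfolding fub_def by auto
  show ?thesis
  proof (cases "near 6 2 a (rw b)")
    case True
    have "near n 0 b b" using b near_refl by blast
    then show ?thesis using src[OF b \<open>even b\<close>] True b rw_lt[of b]
      by (intro cover_intro[where v="(rw b, b)" and p=2 and q=0]) (auto simp: torus_V_iff)
  next
    case False
    then have a3: "a = 3 - rw b" using row_fact2[OF a rw_cases[of b]] by blast
    show ?thesis
    proof (cases "b + 2 < n")
      case True
      have "near 6 0 a (rw (b+2))" using a3 rw_next[of b] a near_refl by simp
      moreover have "near n 2 b (b+2)" using near_n_plus[OF True] .
      moreover have "fub n (rw (b+2), b+2) \<ge> 2" using src[OF True] \<open>even b\<close> by simp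
      ultimately show ?thesis using True rw_lt[of "b+2"]
        by (intro cover_intro[where v="(rw (b+2), b+2)" and p=0 and q=2]) (auto simp: torus_V_iff)
    next
      case False
      then have b2: "2 \<le> b" using n by simp
      obtain c where c: "b = c + 2" using b2 by (metis add.commute le_add_diff_inverse)
      have rb: "rw b = 3 - rw (b - 2)" using rw_next[of c] c by simp
      have "a = rw (b - 2)" using a3 rb rw_cases[of "b-2"] by auto
      then have "near 6 0 a (rw (b-2))" using a near_refl by simp
      moreover have "near n 2 b (b-2)" using near_n_minus[OF b2 b] .
      moreover have "fub n (rw (b-2), b-2) \<ge> 2" using src[of "b-2"] b \<open>even b\<close> b2 by simp
      ultimately show ?thesis using b rw_lt[of "b-2"]
        by (intro cover_intro[where v="(rw (b-2), b-2)" and p=0 and q=2]) (auto simp: torus_V_iff)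
    qed
  qed
next
  case False
  have src: "fub n (rw j, j) \<ge> 2" if "j < n" "even j" for j
    using that unfolding fub_def by auto
  have b1: "1 \<le> b" using False by (cases b) auto
  have L: "near n 1 b (b - 1)" using near_n_minus[OF b1 b] .
  have srcL: "fub n (rw (b-1), b-1) \<ge> 2" using src[of "b-1"] b False b1 by simp
  show ?thesis
  proof (cases "b + 1 < n")
    case True
    have R: "near n 1 b (b + 1)" using near_n_plus[OF True] .
    have srcR: "fub n (rw (b+1), b+1) \<ge> 2" using src[OF True] False by simp
    have rr: "rw (b+1) = 3 - rw (b-1)" using rw_next[of "b-1"] b1 by simp
    from row_fact1[OF a rw_cases[of "b-1"]] show ?thesis
    proof
      assume "near 6 1 a (rw (b-1))"
      then show ?thesis using L srcL b rw_lt[of "b-1"]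
        by (intro cover_intro[where v="(rw (b-1), b-1)" and p=1 and q=1]) (auto simp: torus_V_iff)
    next
      assume "near 6 1 a (3 - rw (b-1))"
      then show ?thesis using R srcR True rw_lt[of "b+1"] rr
        by (intro cover_intro[where v="(rw (b+1), b+1)" and p=1 and q=1]) (auto simp: torus_V_iff)
    qed
  next
    case False
    then have bn: "b = n - 1" using b by simp
    have R: "near n 1 b 0" using near_n_wrap bn n by simp
    have src0: "fub n (0, 0) \<ge> 2" using src[of 0] n by (simp add: rw_def)
    have ev: "even n" using bn \<open>odd b\<close> n by presburger
    show ?thesis
    proof (cases "n mod 4 = 0")
      case True
      have "(n - 2) div 2 mod 2 = 1" using True n by presburger
      then have r3: "rw (b-1) = 3" unfolding rw_def using bn by (simp add: numeral_2_eq_2)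
      from row_fact3[OF a] show ?thesis
      proof
        assume "near 6 1 a 0"
        then show ?thesis using R src0 n
          by (intro cover_intro[where v="(0, 0)" and p=1 and q=1]) (auto simp: torus_V_iff)
      next
        assume "near 6 1 a 3"
        then show ?thesis using L srcL b r3
          by (intro cover_intro[where v="(rw (b-1), b-1)" and p=1 and q=1]) (auto simp: torus_V_iff)
      qed
    next
      case False
      then have n2: "n mod 4 = 2" using ev by presburger
      from row_fact3[OF a] show ?thesis
      proof
        assume "near 6 1 a 0"
        then show ?thesis using R src0 n
          by (intro cover_intro[where v="(0, 0)" and p=1 and q=1]) (auto simp: torus_V_iff)
      next
        assume h: "near 6 1 a 3"
        have "fub n (3, b) = 1" using n2 bn \<open>odd b\<close> unfolding fub_def by auto
        moreover have "near n 0 b b" using b near_refl by blast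
        ultimately show ?thesis using h b
          by (intro cover_intro[where v="(3, b)" and p=1 and q=0]) (auto simp: torus_V_iff)
      qed
    qed
  qed
qed


lemma bcost_torus: "bcost (torus_V m n) f = (\<Sum>j<n. \<Sum>i<m. f (i,j))"
proof -
  have "bcost (torus_V m n) f = (\<Sum>i<m. \<Sum>j<n. f (i,j))"
    unfolding bcost_def torus_V_def atLeast0LessThan
    by (simp add: sum.cartesian_product)
  also have "\<dots> = (\<Sum>j<n. \<Sum>i<m. f (i,j))" by (rule sum.swap)
  finally show ?thesis .
qed

lemma fub_colsum: "(\<Sum>i<6. fub n (i,j)) = (if j < n \<and> even j then 2 else 0) + (if n mod 4 = 2 \<and> j = n - 1 then 1 else 0)"
proof -
  have e: "fub n (i,j) = (if i = rw j then (if j < n \<and> even j then 2 else 0) else 0)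
           + (if i = 3 then (if n mod 4 = 2 \<and> j = n - 1 then 1 else 0) else 0)" for i
    unfolding fub_def by auto
  show ?thesis unfolding e sum.distrib using rw_lt[of j] by (simp add: sum.delta')
qed

lemma sum_even2: "(\<Sum>j<n. (if even j then 2 else 0::nat)) = 2 * ((n + 1) div 2)"
proof (induction n)
  case 0 then show ?case by simp
next
  case (Suc n)
  have "(\<Sum>j<Suc n. (if even j then 2 else 0::nat)) = 2 * ((n + 1) div 2) + (if even n then 2 else 0)"
    using Suc.IH by simp
  also have "\<dots> = 2 * ((Suc n + 1) div 2)" by (cases "even n") (auto elim!: evenE oddE)
  finally show ?case .
qed

lemma fub_cost: assumes "6 \<le> n" shows "bcost (torus_V 6 n) (fub n) = n + (if n mod 4 = 0 then 0 else 1)"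
proof -
    have ssum: "(\<Sum>j<n. (if n mod 4 = 2 \<and> j = n - 1 then 1 else 0::nat)) = (if n mod 4 = 2 then 1 else 0)"
    proof (cases "n mod 4 = 2")
      case True then show ?thesis using assms by (simp add: sum.delta')
    qed simp
  have "bcost (torus_V 6 n) (fub n) = (\<Sum>j<n. (if even j then 2 else 0) + (if n mod 4 = 2 \<and> j = n - 1 then 1 else 0))"
    unfolding bcost_torus fub_colsum by (rule sum.cong) auto
  also have "\<dots> = 2 * ((n + 1) div 2) + (\<Sum>j<n. (if n mod 4 = 2 \<and> j = n - 1 then 1 else 0))"
    unfolding sum.distrib sum_even2 by simp
  also have "\<dots> = 2 * ((n + 1) div 2) + (if n mod 4 = 2 then 1 else 0)" using ssum by simp
  also have "\<dots> = n + (if n mod 4 = 0 then 0 else 1)" by presburger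
  finally show ?thesis .
qed

lemma fub_dom: assumes "6 \<le> n" shows "dom_broadcast2 (torus_V 6 n) (torus_E 6 n) (fub n)"
  unfolding dom_broadcast2_def
proof (intro conjI ballI)
  fix v show "fub n v \<le> 2" by (rule fub_le2)
next
  fix u assume u: "u \<in> torus_V 6 n"
  obtain a b where ab: "u = (a,b)" by (cases u)
  have a: "a < 6" and b: "b < n" using u ab torus_V_iff by auto
  obtain v where v: "v \<in> torus_V 6 n" "fub n v > 0"
     "\<exists>k1 k2. k1 + k2 \<le> fub n v \<and> near 6 k1 a (fst v) \<and> near n k2 b (snd v)"
    using fub_cover[OF assms a b] by blast
  have "gdist (torus_V 6 n) (torus_E 6 n) u v \<le> fub n v"
    using gdist_le_iff[of 6 n u v "fub n v"] v u ab assms by simp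
  then show "\<exists>v\<in>torus_V 6 n. 0 < fub n v \<and> gdist (torus_V 6 n) (torus_E 6 n) u v \<le> fub n v"
    using v by blast
qed




lemma mod_add_cancel_nat: "(j + s) mod n = (j + t) mod (n::nat) \<Longrightarrow> s mod n = t mod n"
proof (cases "s \<le> t")
  case True
  assume h: "(j + s) mod n = (j + t) mod n"
  then have "n dvd (j + t) - (j + s)" using mod_eq_dvd_iff_nat[of "j+s" "j+t" n] True by simp
  then have "n dvd t - s" by simp
  then show ?thesis using mod_eq_dvd_iff_nat[of s t n] True by simp
next
  case False
  assume h: "(j + s) mod n = (j + t) mod n"
  then have "n dvd (j + s) - (j + t)" using mod_eq_dvd_iff_nat[of "j+t" "j+s" n] False by simp
  then have "n dvd s - t" by simp
  then show ?thesis using mod_eq_dvd_iff_nat[of t s n] False by simp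
qed

definition dd :: "nat \<Rightarrow> nat \<Rightarrow> nat" where
  "dd n t = (if t = 0 then 0 else if t = 1 \<or> t = n - 1 then 1 else if t = 2 \<or> t = n - 2 then 2 else 3)"

lemma dd_le: "t < n \<Longrightarrow> dd n t \<le> t \<and> dd n t \<le> n - t"
  unfolding dd_def by auto

lemma near_col_dd:
  assumes n: "6 \<le> n" and j: "j < n" and t: "t < n" and nr: "near n k j ((j + t) mod n)"
  shows "dd n t \<le> k"
proof -
  obtain s where s: "s \<le> k" "(j + s) mod n = (j + t) mod n \<or> ((j + t) mod n + s) mod n = j"
    using nr unfolding near_def by blast
  show ?thesis
  proof (cases "n \<le> s")
    case True
    then show ?thesis using s n unfolding dd_def by auto
  next
    case False
    then have sn: "s < n" by simp
    show ?thesis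
    proof (cases "(j + s) mod n = (j + t) mod n")
      case True
      then have "s mod n = t mod n" by (rule mod_add_cancel_nat)
      then have "s = t" using sn t by simp
      then show ?thesis using dd_le[OF t] s by simp
    next
      case False
      then have h: "((j + t) mod n + s) mod n = j" using s by blast
      then have "(j + (t + s)) mod n = (j + 0) mod n" using j by (simp add: mod_add_left_eq add.assoc)
      then have "(t + s) mod n = 0 mod n" by (rule mod_add_cancel_nat)
      then have "t + s = 0 \<or> t + s = n"
      proof (cases "t + s < n")
        case True then show ?thesis using \<open>(t + s) mod n = 0 mod n\<close> by simp
      next
        case False
        then have "(t + s) mod n = (t + s - n) mod n" by (simp add: le_mod_geq)
        moreover have "t + s - n < n" using sn t by simp
        ultimately have "t + s - n = 0" using \<open>(t + s) mod n = 0 mod n\<close> by simp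
        then show ?thesis using False by simp
      qed
      then show ?thesis
      proof
        assume "t + s = 0" then show ?thesis unfolding dd_def by simp
      next
        assume "t + s = n" then have "s = n - t" by simp
        then show ?thesis using dd_le[OF t] s by simp
      qed
    qed
  qed
qed


lemma row_count: assumes "i' < 6" "r \<le> 2" shows "(\<Sum>i<6. if near 6 r i i' then 1 else 0::nat) \<le> 2 * r + 1"
proof -
  have r: "r = 0 \<or> r = 1 \<or> r = 2" using assms(2) by arith
  show ?thesis using less6[OF assms(1)] r
    by (elim disjE) (simp_all add: numeral_2_eq_2 near_Suc near_0 lessThan_nat_numeral)
qed

definition G :: "nat \<Rightarrow> nat \<Rightarrow> nat" where
  "G d x = (if 0 < x \<and> d \<le> x then 2 * (x - d) + 1 else 0)"

lemma S_bound:
  assumes n: "6 \<le> n" and j: "j < n" and t: "t < n" and x: "x \<le> 2" and i': "i' < 6"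
  shows "(\<Sum>i<6. if 0 < x \<and> (\<exists>k1 k2. k1 + k2 \<le> x \<and> near 6 k1 i i' \<and> near n k2 j ((j + t) mod n)) then 1 else 0::nat)
         \<le> G (dd n t) x"
proof (cases "0 < x \<and> dd n t \<le> x")
  case False
  have "(if 0 < x \<and> (\<exists>k1 k2. k1 + k2 \<le> x \<and> near 6 k1 i i' \<and> near n k2 j ((j + t) mod n)) then 1 else 0::nat) = 0" for i
  proof -
    have "\<not> (0 < x \<and> (\<exists>k1 k2. k1 + k2 \<le> x \<and> near 6 k1 i i' \<and> near n k2 j ((j + t) mod n)))"
    proof
      assume "0 < x \<and> (\<exists>k1 k2. k1 + k2 \<le> x \<and> near 6 k1 i i' \<and> near n k2 j ((j + t) mod n))"
      then obtain k1 k2 where "0 < x" "k1 + k2 \<le> x" "near n k2 j ((j + t) mod n)" by blast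
      then show False using False near_col_dd[OF n j t] by fastforce
    qed
    then show ?thesis by simp
  qed
  then show ?thesis by simp
next
  case True
  have "(if 0 < x \<and> (\<exists>k1 k2. k1 + k2 \<le> x \<and> near 6 k1 i i' \<and> near n k2 j ((j + t) mod n)) then 1 else 0::nat)
        \<le> (if near 6 (x - dd n t) i i' then 1 else 0)" for i
  proof -
    { fix k1 k2 assume h: "k1 + k2 \<le> x" "near 6 k1 i i'" "near n k2 j ((j + t) mod n)"
      have "dd n t \<le> k2" using near_col_dd[OF n j t h(3)] .
      then have "k1 \<le> x - dd n t" using h(1) by simp
      then have "near 6 (x - dd n t) i i'" using near_mono h(2) by blast }
    then show ?thesis by auto
  qed
  then have "(\<Sum>i<6. if 0 < x \<and> (\<exists>k1 k2. k1 + k2 \<le> x \<and> near 6 k1 i i' \<and> near n k2 j ((j + t) mod n)) then 1 else 0::nat)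
        \<le> (\<Sum>i<6. if near 6 (x - dd n t) i i' then 1 else 0)" by (rule sum_mono)
  also have "\<dots> \<le> 2 * (x - dd n t) + 1" using row_count[OF i'] x by simp
  finally show ?thesis using True unfolding G_def by simp
qed

definition Bq :: "nat \<Rightarrow> nat \<Rightarrow> nat \<Rightarrow> nat" where
  "Bq n t c = (if dd n t = 0 then 3 * c else if dd n t = 1 then 3 * c div 2 else if dd n t = 2 then c div 2 else 0)"

definition colc :: "(nat \<times> nat \<Rightarrow> nat) \<Rightarrow> nat \<Rightarrow> nat" where
  "colc f j = (\<Sum>i<6. f (i,j))"

lemma G_col_bound:
  assumes x: "\<And>i. i < 6 \<Longrightarrow> f (i, j') \<le> 2"
  shows "(\<Sum>i'<6. G (dd n t) (f (i', j'))) \<le> Bq n t (colc f j')"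
proof -
  have dd3: "dd n t \<le> 3" unfolding dd_def by auto
  consider "dd n t = 0" | "dd n t = 1" | "dd n t = 2" | "dd n t = 3" using dd3 by arith
  then show ?thesis
  proof cases
    case 1
    have "(\<Sum>i'<6. G (dd n t) (f (i', j'))) \<le> (\<Sum>i'<6. 3 * f (i', j'))"
      by (rule sum_mono) (use x 1 in \<open>auto simp: G_def\<close>)
    then show ?thesis using 1 unfolding Bq_def colc_def by (simp add: sum_distrib_left)
  next
    case 2
    have "(\<Sum>i'<6. 2 * G (dd n t) (f (i', j'))) \<le> (\<Sum>i'<6. 3 * f (i', j'))"
    proof (rule sum_mono)
      fix i' assume "i' \<in> {..<6::nat}"
      then have "f (i',j') \<le> 2" using x by simp
      then show "2 * G (dd n t) (f (i', j')) \<le> 3 * f (i', j')" using 2 unfolding G_def by auto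
    qed
    then have "2 * (\<Sum>i'<6. G (dd n t) (f (i', j'))) \<le> 3 * colc f j'"
      unfolding colc_def by (simp add: sum_distrib_left)
    then show ?thesis using 2 unfolding Bq_def by simp
  next
    case 3
    have "(\<Sum>i'<6. 2 * G (dd n t) (f (i', j'))) \<le> (\<Sum>i'<6. f (i', j'))"
    proof (rule sum_mono)
      fix i' assume "i' \<in> {..<6::nat}"
      then have "f (i',j') \<le> 2" using x by simp
      then show "2 * G (dd n t) (f (i', j')) \<le> f (i', j')" using 3 unfolding G_def by auto
    qed
    then have "2 * (\<Sum>i'<6. G (dd n t) (f (i', j'))) \<le> colc f j'"
      unfolding colc_def by (simp add: sum_distrib_left)
    then show ?thesis using 3 unfolding Bq_def by simp
  next
    case 4
    have "G (dd n t) (f (i', j')) = 0" if "i' < 6" for i'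
      using x[OF that] 4 unfolding G_def by auto
    then show ?thesis by simp
  qed
qed


lemma sum_torus: "(\<Sum>v\<in>torus_V m n. g v) = (\<Sum>j<n. \<Sum>i<m. g (i,j))"
proof -
  have "(\<Sum>v\<in>torus_V m n. g v) = (\<Sum>i<m. \<Sum>j<n. g (i,j))"
    unfolding torus_V_def atLeast0LessThan
    by (simp add: sum.cartesian_product)
  also have "\<dots> = (\<Sum>j<n. \<Sum>i<m. g (i,j))" by (rule sum.swap)
  finally show ?thesis .
qed

lemma reindex_rot: fixes n j :: nat assumes j: "j < n" shows "(\<Sum>j'<n. T j') = (\<Sum>t<n. T ((j + t) mod n))"
proof -
  have "bij_betw (\<lambda>t. (j + t) mod n) {..<n} {..<n}"
    unfolding bij_betw_def
  proof
    show "inj_on (\<lambda>t. (j + t) mod n) {..<n}"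
    proof (rule inj_onI)
      fix s t assume "s \<in> {..<n}" "t \<in> {..<n}" "(j + s) mod n = (j + t) mod n"
      then show "s = t" using mod_add_cancel_nat[of j s n t] by simp
    qed
    show "(\<lambda>t. (j + t) mod n) ` {..<n} = {..<n}"
    proof
      show "(\<lambda>t. (j + t) mod n) ` {..<n} \<subseteq> {..<n}" using j by auto
      show "{..<n} \<subseteq> (\<lambda>t. (j + t) mod n) ` {..<n}"
      proof
        fix y assume y: "y \<in> {..<n}"
        have "(j + (y + n - j) mod n) mod n = (j + (y + n - j)) mod n" by (simp add: mod_add_right_eq)
        also have "j + (y + n - j) = y + n" using j by simp
        finally have "(j + (y + n - j) mod n) mod n = y" using y by simp
        moreover have "(y + n - j) mod n \<in> {..<n}" using j by simp
        ultimately show "y \<in> (\<lambda>t. (j + t) mod n) ` {..<n}" by (metis image_eqI)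
      qed
    qed
  qed
  then show ?thesis by (rule sum.reindex_bij_betw[symmetric])
qed

lemma Bq_sum: assumes n: "6 \<le> n"
  shows "(\<Sum>t<n. Bq n t (C t)) = 3 * C 0 + 3 * C 1 div 2 + C 2 div 2 + C (n - 2) div 2 + 3 * C (n - 1) div 2"
proof -
  let ?S = "{0, 1, 2, n - 2, n - 1}"
  have "(\<Sum>t<n. Bq n t (C t)) = (\<Sum>t\<in>?S. Bq n t (C t))"
  proof (rule sum.mono_neutral_right)
    show "?S \<subseteq> {..<n}" using n by auto
    show "\<forall>t\<in>{..<n} - ?S. Bq n t (C t) = 0" unfolding Bq_def dd_def by auto
  qed simp
  also have "\<dots> = 3 * C 0 + 3 * C 1 div 2 + C 2 div 2 + C (n - 2) div 2 + 3 * C (n - 1) div 2"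
  proof -
    have ne: "n - 2 \<noteq> 0" "n - 2 \<noteq> 1" "n - 2 \<noteq> 2" "n - 1 \<noteq> 0" "n - 1 \<noteq> 1" "n - 1 \<noteq> 2" "n - 1 \<noteq> n - 2"
      using n by arith+
    have d: "dd n 0 = 0" "dd n 1 = 1" "dd n 2 = 2" "dd n (n - 2) = 2" "dd n (n - 1) = 1"
      using n unfolding dd_def by auto
    have b: "Bq n 0 c = 3*c" "Bq n (Suc 0) c = 3*c div 2" "Bq n 2 c = c div 2" "Bq n (n - 2) c = c div 2"
        "Bq n (n - Suc 0) c = 3*c div 2" for c
      using d unfolding Bq_def by auto
    show ?thesis using ne ne[symmetric] by (simp add: b)
  qed
  finally show ?thesis .
qed

lemma col_ineq_G:
  assumes n: "6 \<le> n" and dom: "dom_broadcast2 (torus_V 6 n) (torus_E 6 n) f" and j: "j < n"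
  shows "6 \<le> (\<Sum>t<n. \<Sum>i'<6. G (dd n t) (f (i', (j + t) mod n)))"
proof -
  let ?V = "torus_V 6 n"
  define P where "P i v \<longleftrightarrow> 0 < f v \<and> (\<exists>k1 k2. k1 + k2 \<le> f v \<and> near 6 k1 i (fst v) \<and> near n k2 j (snd v))" for i v
  have f2: "f v \<le> 2" if "v \<in> ?V" for v using dom that unfolding dom_broadcast2_def by blast
  have cov: "\<exists>v\<in>?V. P i v" if i: "i < 6" for i
  proof -
    have u: "(i,j) \<in> ?V" using i j torus_V_iff by simp
    obtain v where v: "v \<in> ?V" "0 < f v" "gdist ?V (torus_E 6 n) (i,j) v \<le> f v"
      using dom u unfolding dom_broadcast2_def by blast
    then have "P i v" unfolding P_def using gdist_le_iff[of 6 n "(i,j)" v "f v"] u n by simp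
    then show ?thesis using v by blast
  qed
  have fin: "finite ?V" unfolding torus_V_def by simp
  have one: "1 \<le> (\<Sum>v\<in>?V. if P i v then 1 else 0::nat)" if i: "i < 6" for i
  proof -
    obtain v where v: "v \<in> ?V" "P i v" using cov[OF i] by blast
    have "(if P i v then 1 else 0::nat) \<le> (\<Sum>v\<in>?V. if P i v then 1 else 0)"
      by (rule member_le_sum[OF v(1) _ fin]) simp
    then show ?thesis using v by simp
  qed
  have "6 = (\<Sum>i<(6::nat). 1::nat)" by simp
  also have "\<dots> \<le> (\<Sum>i<6. \<Sum>v\<in>?V. if P i v then 1 else 0::nat)" by (rule sum_mono) (use one in simp)
  also have "\<dots> = (\<Sum>v\<in>?V. \<Sum>i<6. if P i v then 1 else 0::nat)" by (rule sum.swap)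
  also have "\<dots> = (\<Sum>j'<n. \<Sum>i'<6. \<Sum>i<6. if P i (i',j') then 1 else 0::nat)" by (rule sum_torus)
  also have "\<dots> = (\<Sum>t<n. \<Sum>i'<6. \<Sum>i<6. if P i (i',(j + t) mod n) then 1 else 0::nat)" by (rule reindex_rot[OF j])
  also have "\<dots> \<le> (\<Sum>t<n. \<Sum>i'<6. G (dd n t) (f (i', (j + t) mod n)))"
  proof (rule sum_mono, rule sum_mono)
    fix t i' assume t: "t \<in> {..<n}" and i': "i' \<in> {..<6::nat}"
    have t': "t < n" and i'': "i' < 6" using t i' by auto
    have "(i', (j + t) mod n) \<in> ?V" using i' t j torus_V_iff n by simp
    then have x: "f (i', (j + t) mod n) \<le> 2" by (rule f2)
    show "(\<Sum>i<6. if P i (i',(j + t) mod n) then 1 else 0::nat) \<le> G (dd n t) (f (i', (j + t) mod n))"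
      unfolding P_def fst_conv snd_conv using S_bound[OF n j t' x i''] by simp
  qed
  finally show ?thesis .
qed

lemma col_ineq:
  assumes n: "6 \<le> n" and dom: "dom_broadcast2 (torus_V 6 n) (torus_E 6 n) f" and j: "j < n"
  shows "6 \<le> 3 * colc f j + 3 * colc f ((j + 1) mod n) div 2 + colc f ((j + 2) mod n) div 2
            + colc f ((j + (n - 2)) mod n) div 2 + 3 * colc f ((j + (n - 1)) mod n) div 2"
proof -
  have f2: "f v \<le> 2" if "v \<in> torus_V 6 n" for v using dom that unfolding dom_broadcast2_def by blast
  have "6 \<le> (\<Sum>t<n. \<Sum>i'<6. G (dd n t) (f (i', (j + t) mod n)))" by (rule col_ineq_G[OF n dom j])
  also have "\<dots> \<le> (\<Sum>t<n. Bq n t (colc f ((j + t) mod n)))"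
  proof (rule sum_mono, rule G_col_bound)
    fix t i assume "t \<in> {..<n}" "i < (6::nat)"
    then show "f (i, (j + t) mod n) \<le> 2" using f2 torus_V_iff n by simp
  qed
  also have "\<dots> = 3 * colc f j + 3 * colc f ((j + 1) mod n) div 2 + colc f ((j + 2) mod n) div 2
            + colc f ((j + (n - 2)) mod n) div 2 + 3 * colc f ((j + (n - 1)) mod n) div 2"
    using Bq_sum[OF n, of "\<lambda>t. colc f ((j + t) mod n)"] j by simp
  finally show ?thesis .
qed




datatype cat = K0 | K1 | K2 | K3 | K4 | K6

fun cv :: "cat \<Rightarrow> nat" where "cv K0 = 0" | "cv K1 = 1" | "cv K2 = 2" | "cv K3 = 3" | "cv K4 = 4" | "cv K6 = 6"
fun Af :: "cat \<Rightarrow> nat" where "Af K0 = 0" | "Af K1 = 3" | "Af K2 = 6" | "Af K3 = 6" | "Af K4 = 6" | "Af K6 = 6"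
fun Bf :: "cat \<Rightarrow> nat" where "Bf K0 = 0" | "Bf K1 = 1" | "Bf K2 = 3" | "Bf K3 = 4" | "Bf K4 = 6" | "Bf K6 = 6"
fun Hf :: "cat \<Rightarrow> nat" where "Hf K0 = 0" | "Hf K1 = 0" | "Hf K2 = 1" | "Hf K3 = 1" | "Hf K4 = 2" | "Hf K6 = 6"

definition phi :: "cat \<Rightarrow> cat \<Rightarrow> cat \<Rightarrow> cat \<Rightarrow> int" where "phi a b c d = (case a of K0 \<Rightarrow> (case b of K0 \<Rightarrow> (case c of K0 \<Rightarrow> (case d of K0 \<Rightarrow> (-26) | K1 \<Rightarrow> (-26) | K2 \<Rightarrow> (-26) | K3 \<Rightarrow> (-26) | K4 \<Rightarrow> (-26) | K6 \<Rightarrow> (-39)) | K1 \<Rightarrow> (case d of K0 \<Rightarrow> (-26) | K1 \<Rightarrow> (-26) | K2 \<Rightarrow> (-26) | K3 \<Rightarrow> (-26) | K4 \<Rightarrow> (-26) | K6 \<Rightarrow> (-39)) | K2 \<Rightarrow> (case d of K0 \<Rightarrow> (-26) | K1 \<Rightarrow> (-26) | K2 \<Rightarrow> (-30) | K3 \<Rightarrow> (-30) | K4 \<Rightarrow> (-30) | K6 \<Rightarrow> (-39)) | K3 \<Rightarrow> (case d of K0 \<Rightarrow> (-30) | K1 \<Rightarrow> (-30) | K2 \<Rightarrow> (-30) | K3 \<Rightarrow> (-30) | K4 \<Rightarrow> (-39) | K6 \<Rightarrow> (-39)) | K4 \<Rightarrow> (case d of K0 \<Rightarrow> (-39) | K1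 \<Rightarrow> (-39) | K2 \<Rightarrow> (-39) | K3 \<Rightarrow> (-39) | K4 \<Rightarrow> (-39) | K6 \<Rightarrow> (-39)) | K6 \<Rightarrow> (case d of K0 \<Rightarrow> (-52) | K1 \<Rightarrow> (-52) | K2 \<Rightarrow> (-52) | K3 \<Rightarrow> (-52) | K4 \<Rightarrow> (-52) | K6 \<Rightarrow> (-52))) | K1 \<Rightarrow> (case c of K0 \<Rightarrow> (case d of K0 \<Rightarrow> (-14) | K1 \<Rightarrow> (-14) | K2 \<Rightarrow> (-18) | K3 \<Rightarrow> (-18) | K4 \<Rightarrow> (-18) | K6 \<Rightarrow> (-27)) | K1 \<Rightarrow> (case d of K0 \<Rightarrow> (-18) | K1 \<Rightarrow> (-18) | K2 \<Rightarrow> (-18) | K3 \<Rightarrow> (-18) | K4 \<Rightarrow> (-27) | K6 \<Rightarrow> (-27)) | K2 \<Rightarrow> (case d of K0 \<Rightarrow> (-27) | K1 \<Rightarrow> (-27) | K2 \<Rightarrow> (-27) | K3 \<Rightarrow> (-27) | K4 \<Rightarrow> (-27) | K6 \<Rightarrow> (-27)) | K3 \<Rightarrow> (case d of K0 \<Rightarrow> (-27) | K1 \<Rightarrow> (-27) | K2 \<Rightarrow> (-27) | K3 \<Rightarrow> (-27) | K4 \<Rightarrow> (-27) | K6 \<Rightarrow> (-27)) | K4 \<Rightarrow> (case d of K0 \<Rightarrow> (-32) | K1 \<Rightarrow> (-32) | K2 \<Rightarrow> (-32) | K3 \<Rightarrow> (-32) | K4 \<Rightarrow> (-32) | K6 \<Rightarrow>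 (-32)) | K6 \<Rightarrow> (case d of K0 \<Rightarrow> (-40) | K1 \<Rightarrow> (-40) | K2 \<Rightarrow> (-40) | K3 \<Rightarrow> (-40) | K4 \<Rightarrow> (-40) | K6 \<Rightarrow> (-40))) | K2 \<Rightarrow> (case c of K0 \<Rightarrow> (case d of K0 \<Rightarrow> (-18) | K1 \<Rightarrow> (-18) | K2 \<Rightarrow> (-17) | K3 \<Rightarrow> (-18) | K4 \<Rightarrow> (-18) | K6 \<Rightarrow> (-18)) | K1 \<Rightarrow> (case d of K0 \<Rightarrow> (-19) | K1 \<Rightarrow> (-19) | K2 \<Rightarrow> (-19) | K3 \<Rightarrow> (-19) | K4 \<Rightarrow> (-19) | K6 \<Rightarrow> (-19)) | K2 \<Rightarrow> (case d of K0 \<Rightarrow> (-22) | K1 \<Rightarrow> (-22) | K2 \<Rightarrow> (-22) | K3 \<Rightarrow> (-22) | K4 \<Rightarrow> (-22) | K6 \<Rightarrow> (-22)) | K3 \<Rightarrow> (case d of K0 \<Rightarrow> (-22) | K1 \<Rightarrow> (-22) | K2 \<Rightarrow> (-22) | K3 \<Rightarrow> (-22) | K4 \<Rightarrow> (-22) | K6 \<Rightarrow> (-22)) | K4 \<Rightarrow> (case d of K0 \<Rightarrow> (-23) | K1 \<Rightarrow> (-23) | K2 \<Rightarrow> (-23) | K3 \<Rightarrow> (-23) | K4 \<Rightarrow> (-23) | K6 \<Rightarrow> (-23)) | K6 \<Rightarrow> (case d of K0 \<Rightarrow> (-28) | K1 \<Rightarrow> (-28) | K2 \<Rightarrow> (-28)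 | K3 \<Rightarrow> (-28) | K4 \<Rightarrow> (-28) | K6 \<Rightarrow> (-28))) | K3 \<Rightarrow> (case c of K0 \<Rightarrow> (case d of K0 \<Rightarrow> (-10) | K1 \<Rightarrow> (-10) | K2 \<Rightarrow> (-10) | K3 \<Rightarrow> (-10) | K4 \<Rightarrow> (-10) | K6 \<Rightarrow> (-10)) | K1 \<Rightarrow> (case d of K0 \<Rightarrow> (-10) | K1 \<Rightarrow> (-10) | K2 \<Rightarrow> (-10) | K3 \<Rightarrow> (-10) | K4 \<Rightarrow> (-10) | K6 \<Rightarrow> (-10)) | K2 \<Rightarrow> (case d of K0 \<Rightarrow> (-11) | K1 \<Rightarrow> (-11) | K2 \<Rightarrow> (-11) | K3 \<Rightarrow> (-11) | K4 \<Rightarrow> (-11) | K6 \<Rightarrow> (-11)) | K3 \<Rightarrow> (case d of K0 \<Rightarrow> (-11) | K1 \<Rightarrow> (-11) | K2 \<Rightarrow> (-11) | K3 \<Rightarrow> (-11) | K4 \<Rightarrow> (-11) | K6 \<Rightarrow> (-11)) | K4 \<Rightarrow> (case d of K0 \<Rightarrow> (-16) | K1 \<Rightarrow> (-16) | K2 \<Rightarrow> (-16) | K3 \<Rightarrow> (-16) | K4 \<Rightarrow> (-16) | K6 \<Rightarrow> (-16)) | K6 \<Rightarrow> (case d of K0 \<Rightarrow> (-16) | K1 \<Rightarrow> (-16) | K2 \<Rightarrow> (-16) | K3 \<Rightarrow> (-16) | K4 \<Rightarrow> (-16) | K6 \<Rightarrow> (-16))) | K4 \<Rightarrow> (case c of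 K0 \<Rightarrow> (case d of K0 \<Rightarrow> (-4) | K1 \<Rightarrow> (-4) | K2 \<Rightarrow> (-4) | K3 \<Rightarrow> (-4) | K4 \<Rightarrow> (-4) | K6 \<Rightarrow> (-4)) | K1 \<Rightarrow> (case d of K0 \<Rightarrow> (-4) | K1 \<Rightarrow> (-4) | K2 \<Rightarrow> (-4) | K3 \<Rightarrow> (-4) | K4 \<Rightarrow> (-4) | K6 \<Rightarrow> (-4)) | K2 \<Rightarrow> (case d of K0 \<Rightarrow> (-4) | K1 \<Rightarrow> (-4) | K2 \<Rightarrow> (-4) | K3 \<Rightarrow> (-4) | K4 \<Rightarrow> (-4) | K6 \<Rightarrow> (-4)) | K3 \<Rightarrow> (case d of K0 \<Rightarrow> (-4) | K1 \<Rightarrow> (-4) | K2 \<Rightarrow> (-4) | K3 \<Rightarrow> (-4) | K4 \<Rightarrow> (-4) | K6 \<Rightarrow> (-4)) | K4 \<Rightarrow> (case d of K0 \<Rightarrow> (-4) | K1 \<Rightarrow> (-4) | K2 \<Rightarrow> (-4) | K3 \<Rightarrow> (-4) | K4 \<Rightarrow> (-4) | K6 \<Rightarrow> (-4)) | K6 \<Rightarrow> (case d of K0 \<Rightarrow> (-4) | K1 \<Rightarrow> (-4) | K2 \<Rightarrow> (-4) | K3 \<Rightarrow> (-4) | K4 \<Rightarrow> (-4) | K6 \<Rightarrow> (-4))) | K6 \<Rightarrow> (case c of K0 \<Rightarrow> (case d of K0 \<Rightarrow> 0 | K1 \<Rightarrow> 0 | K2 \<Rightarrow> 0 | K3 \<Rightarrow>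 0 | K4 \<Rightarrow> 0 | K6 \<Rightarrow> 0) | K1 \<Rightarrow> (case d of K0 \<Rightarrow> 0 | K1 \<Rightarrow> 0 | K2 \<Rightarrow> 0 | K3 \<Rightarrow> 0 | K4 \<Rightarrow> 0 | K6 \<Rightarrow> 0) | K2 \<Rightarrow> (case d of K0 \<Rightarrow> 0 | K1 \<Rightarrow> 0 | K2 \<Rightarrow> 0 | K3 \<Rightarrow> 0 | K4 \<Rightarrow> 0 | K6 \<Rightarrow> 0) | K3 \<Rightarrow> (case d of K0 \<Rightarrow> 0 | K1 \<Rightarrow> 0 | K2 \<Rightarrow> 0 | K3 \<Rightarrow> 0 | K4 \<Rightarrow> 0 | K6 \<Rightarrow> 0) | K4 \<Rightarrow> (case d of K0 \<Rightarrow> 0 | K1 \<Rightarrow> 0 | K2 \<Rightarrow> 0 | K3 \<Rightarrow> 0 | K4 \<Rightarrow> 0 | K6 \<Rightarrow> 0) | K6 \<Rightarrow> (case d of K0 \<Rightarrow> 0 | K1 \<Rightarrow> 0 | K2 \<Rightarrow> 0 | K3 \<Rightarrow> 0 | K4 \<Rightarrow> 0 | K6 \<Rightarrow> 0))) | K1 \<Rightarrow> (case b of K0 \<Rightarrow> (case c of K0 \<Rightarrow> (case d of K0 \<Rightarrow> (-14) | K1 \<Rightarrow> (-14) | K2 \<Rightarrow> (-14) | K3 \<Rightarrow> (-14) | K4 \<Rightarrow> (-14) | K6 \<Rightarrow> (-33)) | K1 \<Rightarrow> (case d of K0 \<Rightarrow> (-14) | K1 \<Rightarrow> (-14) | K2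 \<Rightarrow> (-14) | K3 \<Rightarrow> (-14) | K4 \<Rightarrow> (-18) | K6 \<Rightarrow> (-33)) | K2 \<Rightarrow> (case d of K0 \<Rightarrow> (-18) | K1 \<Rightarrow> (-18) | K2 \<Rightarrow> (-33) | K3 \<Rightarrow> (-33) | K4 \<Rightarrow> (-34) | K6 \<Rightarrow> (-34)) | K3 \<Rightarrow> (case d of K0 \<Rightarrow> (-33) | K1 \<Rightarrow> (-33) | K2 \<Rightarrow> (-34) | K3 \<Rightarrow> (-34) | K4 \<Rightarrow> (-34) | K6 \<Rightarrow> (-34)) | K4 \<Rightarrow> (case d of K0 \<Rightarrow> (-35) | K1 \<Rightarrow> (-35) | K2 \<Rightarrow> (-35) | K3 \<Rightarrow> (-35) | K4 \<Rightarrow> (-35) | K6 \<Rightarrow> (-35)) | K6 \<Rightarrow> (case d of K0 \<Rightarrow> (-40) | K1 \<Rightarrow> (-40) | K2 \<Rightarrow> (-40) | K3 \<Rightarrow> (-40) | K4 \<Rightarrow> (-40) | K6 \<Rightarrow> (-40))) | K1 \<Rightarrow> (case c of K0 \<Rightarrow> (case d of K0 \<Rightarrow> (-6) | K1 \<Rightarrow> (-6) | K2 \<Rightarrow> (-21) | K3 \<Rightarrow> (-21) | K4 \<Rightarrow> (-22) | K6 \<Rightarrow> (-22)) | K1 \<Rightarrow> (case d of K0 \<Rightarrow> (-21) | K1 \<Rightarrow> (-21) | K2 \<Rightarrow> (-22) | K3 \<Rightarrow> (-22) | K4 \<Rightarrow> (-22) | K6 \<Rightarrow> (-22)) | K2 \<Rightarrow>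 (case d of K0 \<Rightarrow> (-23) | K1 \<Rightarrow> (-23) | K2 \<Rightarrow> (-23) | K3 \<Rightarrow> (-23) | K4 \<Rightarrow> (-23) | K6 \<Rightarrow> (-23)) | K3 \<Rightarrow> (case d of K0 \<Rightarrow> (-23) | K1 \<Rightarrow> (-23) | K2 \<Rightarrow> (-23) | K3 \<Rightarrow> (-23) | K4 \<Rightarrow> (-23) | K6 \<Rightarrow> (-23)) | K4 \<Rightarrow> (case d of K0 \<Rightarrow> (-28) | K1 \<Rightarrow> (-28) | K2 \<Rightarrow> (-28) | K3 \<Rightarrow> (-28) | K4 \<Rightarrow> (-28) | K6 \<Rightarrow> (-28)) | K6 \<Rightarrow> (case d of K0 \<Rightarrow> (-28) | K1 \<Rightarrow> (-28) | K2 \<Rightarrow> (-28) | K3 \<Rightarrow> (-28) | K4 \<Rightarrow> (-28) | K6 \<Rightarrow> (-28))) | K2 \<Rightarrow> (case c of K0 \<Rightarrow> (case d of K0 \<Rightarrow> (-16) | K1 \<Rightarrow> (-16) | K2 \<Rightarrow> (-16) | K3 \<Rightarrow> (-16) | K4 \<Rightarrow> (-16) | K6 \<Rightarrow> (-16)) | K1 \<Rightarrow> (case d of K0 \<Rightarrow> (-16) | K1 \<Rightarrow> (-16) | K2 \<Rightarrow> (-16) | K3 \<Rightarrow> (-16) | K4 \<Rightarrow> (-16) | K6 \<Rightarrow> (-16)) | K2 \<Rightarrow> (case d of K0 \<Rightarrow> (-16) | K1 \<Rightarrow> (-16) | K2 \<Rightarrow> (-16) | K3 \<Rightarrow> (-16)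 | K4 \<Rightarrow> (-16) | K6 \<Rightarrow> (-16)) | K3 \<Rightarrow> (case d of K0 \<Rightarrow> (-16) | K1 \<Rightarrow> (-16) | K2 \<Rightarrow> (-16) | K3 \<Rightarrow> (-16) | K4 \<Rightarrow> (-16) | K6 \<Rightarrow> (-16)) | K4 \<Rightarrow> (case d of K0 \<Rightarrow> (-16) | K1 \<Rightarrow> (-16) | K2 \<Rightarrow> (-16) | K3 \<Rightarrow> (-16) | K4 \<Rightarrow> (-16) | K6 \<Rightarrow> (-16)) | K6 \<Rightarrow> (case d of K0 \<Rightarrow> (-16) | K1 \<Rightarrow> (-16) | K2 \<Rightarrow> (-16) | K3 \<Rightarrow> (-16) | K4 \<Rightarrow> (-16) | K6 \<Rightarrow> (-16))) | K3 \<Rightarrow> (case c of K0 \<Rightarrow> (case d of K0 \<Rightarrow> (-4) | K1 \<Rightarrow> (-4) | K2 \<Rightarrow> (-4) | K3 \<Rightarrow> (-4) | K4 \<Rightarrow> (-4) | K6 \<Rightarrow> (-4)) | K1 \<Rightarrow> (case d of K0 \<Rightarrow> (-4) | K1 \<Rightarrow> (-4) | K2 \<Rightarrow> (-4) | K3 \<Rightarrow> (-4) | K4 \<Rightarrow> (-4) | K6 \<Rightarrow> (-4)) | K2 \<Rightarrow> (case d of K0 \<Rightarrow> (-4) | K1 \<Rightarrow> (-4) | K2 \<Rightarrow> (-4) | K3 \<Rightarrow> (-4) | K4 \<Rightarrow> (-4) | K6 \<Rightarrow> (-4)) | K3 \<Rightarrow> (case d of K0 \<Rightarrow> (-4) |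 K1 \<Rightarrow> (-4) | K2 \<Rightarrow> (-4) | K3 \<Rightarrow> (-4) | K4 \<Rightarrow> (-4) | K6 \<Rightarrow> (-4)) | K4 \<Rightarrow> (case d of K0 \<Rightarrow> (-4) | K1 \<Rightarrow> (-4) | K2 \<Rightarrow> (-4) | K3 \<Rightarrow> (-4) | K4 \<Rightarrow> (-4) | K6 \<Rightarrow> (-4)) | K6 \<Rightarrow> (case d of K0 \<Rightarrow> (-4) | K1 \<Rightarrow> (-4) | K2 \<Rightarrow> (-4) | K3 \<Rightarrow> (-4) | K4 \<Rightarrow> (-4) | K6 \<Rightarrow> (-4))) | K4 \<Rightarrow> (case c of K0 \<Rightarrow> (case d of K0 \<Rightarrow> 0 | K1 \<Rightarrow> 0 | K2 \<Rightarrow> 0 | K3 \<Rightarrow> 0 | K4 \<Rightarrow> 0 | K6 \<Rightarrow> 0) | K1 \<Rightarrow> (case d of K0 \<Rightarrow> 0 | K1 \<Rightarrow> 0 | K2 \<Rightarrow> 0 | K3 \<Rightarrow> 0 | K4 \<Rightarrow> 0 | K6 \<Rightarrow> 0) | K2 \<Rightarrow> (case d of K0 \<Rightarrow> 0 | K1 \<Rightarrow> 0 | K2 \<Rightarrow> 0 | K3 \<Rightarrow> 0 | K4 \<Rightarrow> 0 | K6 \<Rightarrow> 0) | K3 \<Rightarrow> (case d of K0 \<Rightarrow> 0 | K1 \<Rightarrow> 0 | K2 \<Rightarrow> 0 | K3 \<Rightarrow> 0 | K4 \<Rightarrow> 0 | K6 \<Rightarrow> 0) | K4 \<Rightarrow>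 (case d of K0 \<Rightarrow> 0 | K1 \<Rightarrow> 0 | K2 \<Rightarrow> 0 | K3 \<Rightarrow> 0 | K4 \<Rightarrow> 0 | K6 \<Rightarrow> 0) | K6 \<Rightarrow> (case d of K0 \<Rightarrow> 0 | K1 \<Rightarrow> 0 | K2 \<Rightarrow> 0 | K3 \<Rightarrow> 0 | K4 \<Rightarrow> 0 | K6 \<Rightarrow> 0)) | K6 \<Rightarrow> (case c of K0 \<Rightarrow> (case d of K0 \<Rightarrow> 0 | K1 \<Rightarrow> 0 | K2 \<Rightarrow> 0 | K3 \<Rightarrow> 0 | K4 \<Rightarrow> 0 | K6 \<Rightarrow> 0) | K1 \<Rightarrow> (case d of K0 \<Rightarrow> 0 | K1 \<Rightarrow> 0 | K2 \<Rightarrow> 0 | K3 \<Rightarrow> 0 | K4 \<Rightarrow> 0 | K6 \<Rightarrow> 0) | K2 \<Rightarrow> (case d of K0 \<Rightarrow> 0 | K1 \<Rightarrow> 0 | K2 \<Rightarrow> 0 | K3 \<Rightarrow> 0 | K4 \<Rightarrow> 0 | K6 \<Rightarrow> 0) | K3 \<Rightarrow> (case d of K0 \<Rightarrow> 0 | K1 \<Rightarrow> 0 | K2 \<Rightarrow> 0 | K3 \<Rightarrow> 0 | K4 \<Rightarrow> 0 | K6 \<Rightarrow> 0) | K4 \<Rightarrow> (case d of K0 \<Rightarrow> 0 | K1 \<Rightarrow> 0 | K2 \<Rightarrow> 0 | K3 \<Rightarrow> 0 | K4 \<Rightarrow> 0 | K6 \<Rightarrow> 0) | K6 \<Rightarrow>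 (case d of K0 \<Rightarrow> 0 | K1 \<Rightarrow> 0 | K2 \<Rightarrow> 0 | K3 \<Rightarrow> 0 | K4 \<Rightarrow> 0 | K6 \<Rightarrow> 0))) | K2 \<Rightarrow> (case b of K0 \<Rightarrow> (case c of K0 \<Rightarrow> (case d of K0 \<Rightarrow> (-13) | K1 \<Rightarrow> (-13) | K2 \<Rightarrow> (-13) | K3 \<Rightarrow> (-13) | K4 \<Rightarrow> (-24) | K6 \<Rightarrow> (-31)) | K1 \<Rightarrow> (case d of K0 \<Rightarrow> (-13) | K1 \<Rightarrow> (-13) | K2 \<Rightarrow> (-24) | K3 \<Rightarrow> (-24) | K4 \<Rightarrow> (-31) | K6 \<Rightarrow> (-31)) | K2 \<Rightarrow> (case d of K0 \<Rightarrow> (-29) | K1 \<Rightarrow> (-30) | K2 \<Rightarrow> (-30) | K3 \<Rightarrow> (-30) | K4 \<Rightarrow> (-30) | K6 \<Rightarrow> (-30)) | K3 \<Rightarrow> (case d of K0 \<Rightarrow> (-31) | K1 \<Rightarrow> (-31) | K2 \<Rightarrow> (-31) | K3 \<Rightarrow> (-31) | K4 \<Rightarrow> (-31) | K6 \<Rightarrow> (-31)) | K4 \<Rightarrow> (case d of K0 \<Rightarrow> (-31) | K1 \<Rightarrow> (-31) | K2 \<Rightarrow> (-31) | K3 \<Rightarrow> (-31) | K4 \<Rightarrow> (-31) | K6 \<Rightarrow> (-31)) | K6 \<Rightarrow> (case d of K0 \<Rightarrow> (-31) | K1 \<Rightarrow> (-31) | K2 \<Rightarrow> (-31) | K3 \<Rightarrow>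 (-31) | K4 \<Rightarrow> (-31) | K6 \<Rightarrow> (-31))) | K1 \<Rightarrow> (case c of K0 \<Rightarrow> (case d of K0 \<Rightarrow> (-20) | K1 \<Rightarrow> (-20) | K2 \<Rightarrow> (-20) | K3 \<Rightarrow> (-20) | K4 \<Rightarrow> (-20) | K6 \<Rightarrow> (-20)) | K1 \<Rightarrow> (case d of K0 \<Rightarrow> (-20) | K1 \<Rightarrow> (-20) | K2 \<Rightarrow> (-20) | K3 \<Rightarrow> (-20) | K4 \<Rightarrow> (-20) | K6 \<Rightarrow> (-20)) | K2 \<Rightarrow> (case d of K0 \<Rightarrow> (-20) | K1 \<Rightarrow> (-20) | K2 \<Rightarrow> (-20) | K3 \<Rightarrow> (-20) | K4 \<Rightarrow> (-20) | K6 \<Rightarrow> (-20)) | K3 \<Rightarrow> (case d of K0 \<Rightarrow> (-20) | K1 \<Rightarrow> (-20) | K2 \<Rightarrow> (-20) | K3 \<Rightarrow> (-20) | K4 \<Rightarrow> (-20) | K6 \<Rightarrow> (-20)) | K4 \<Rightarrow> (case d of K0 \<Rightarrow> (-20) | K1 \<Rightarrow> (-20) | K2 \<Rightarrow> (-20) | K3 \<Rightarrow> (-20) | K4 \<Rightarrow> (-20) | K6 \<Rightarrow> (-20)) | K6 \<Rightarrow> (case d of K0 \<Rightarrow> (-20) | K1 \<Rightarrow> (-20) | K2 \<Rightarrow> (-20) | K3 \<Rightarrow> (-20) | K4 \<Rightarrow> (-20) | K6 \<Rightarrow> (-20))) | K2 \<Rightarrow> (case c of K0 \<Rightarrow> (case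 d of K0 \<Rightarrow> (-11) | K1 \<Rightarrow> (-11) | K2 \<Rightarrow> (-11) | K3 \<Rightarrow> (-11) | K4 \<Rightarrow> (-11) | K6 \<Rightarrow> (-11)) | K1 \<Rightarrow> (case d of K0 \<Rightarrow> (-11) | K1 \<Rightarrow> (-11) | K2 \<Rightarrow> (-11) | K3 \<Rightarrow> (-11) | K4 \<Rightarrow> (-11) | K6 \<Rightarrow> (-11)) | K2 \<Rightarrow> (case d of K0 \<Rightarrow> (-11) | K1 \<Rightarrow> (-11) | K2 \<Rightarrow> (-11) | K3 \<Rightarrow> (-11) | K4 \<Rightarrow> (-11) | K6 \<Rightarrow> (-11)) | K3 \<Rightarrow> (case d of K0 \<Rightarrow> (-11) | K1 \<Rightarrow> (-11) | K2 \<Rightarrow> (-11) | K3 \<Rightarrow> (-11) | K4 \<Rightarrow> (-11) | K6 \<Rightarrow> (-11)) | K4 \<Rightarrow> (case d of K0 \<Rightarrow> (-11) | K1 \<Rightarrow> (-11) | K2 \<Rightarrow> (-11) | K3 \<Rightarrow> (-11) | K4 \<Rightarrow> (-11) | K6 \<Rightarrow> (-11)) | K6 \<Rightarrow> (case d of K0 \<Rightarrow> (-11) | K1 \<Rightarrow> (-11) | K2 \<Rightarrow> (-11) | K3 \<Rightarrow> (-11) | K4 \<Rightarrow> (-11) | K6 \<Rightarrow> (-11))) | K3 \<Rightarrow> (case c of K0 \<Rightarrow> (case d of K0 \<Rightarrow> 0 | K1 \<Rightarrow> 0 | K2 \<Rightarrow> 0 | K3 \<Rightarrow> 0 | K4 \<Rightarrow>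 0 | K6 \<Rightarrow> 0) | K1 \<Rightarrow> (case d of K0 \<Rightarrow> 0 | K1 \<Rightarrow> 0 | K2 \<Rightarrow> 0 | K3 \<Rightarrow> 0 | K4 \<Rightarrow> 0 | K6 \<Rightarrow> 0) | K2 \<Rightarrow> (case d of K0 \<Rightarrow> 0 | K1 \<Rightarrow> 0 | K2 \<Rightarrow> 0 | K3 \<Rightarrow> 0 | K4 \<Rightarrow> 0 | K6 \<Rightarrow> 0) | K3 \<Rightarrow> (case d of K0 \<Rightarrow> 0 | K1 \<Rightarrow> 0 | K2 \<Rightarrow> 0 | K3 \<Rightarrow> 0 | K4 \<Rightarrow> 0 | K6 \<Rightarrow> 0) | K4 \<Rightarrow> (case d of K0 \<Rightarrow> 0 | K1 \<Rightarrow> 0 | K2 \<Rightarrow> 0 | K3 \<Rightarrow> 0 | K4 \<Rightarrow> 0 | K6 \<Rightarrow> 0) | K6 \<Rightarrow> (case d of K0 \<Rightarrow> 0 | K1 \<Rightarrow> 0 | K2 \<Rightarrow> 0 | K3 \<Rightarrow> 0 | K4 \<Rightarrow> 0 | K6 \<Rightarrow> 0)) | K4 \<Rightarrow> (case c of K0 \<Rightarrow> (case d of K0 \<Rightarrow> 0 | K1 \<Rightarrow> 0 | K2 \<Rightarrow> 0 | K3 \<Rightarrow> 0 | K4 \<Rightarrow> 0 | K6 \<Rightarrow> 0) | K1 \<Rightarrow> (case d of K0 \<Rightarrow> 0 | K1 \<Rightarrow> 0 | K2 \<Rightarrow> 0 | K3 \<Rightarrow> 0 | K4 \<Rightarrow>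 0 | K6 \<Rightarrow> 0) | K2 \<Rightarrow> (case d of K0 \<Rightarrow> 0 | K1 \<Rightarrow> 0 | K2 \<Rightarrow> 0 | K3 \<Rightarrow> 0 | K4 \<Rightarrow> 0 | K6 \<Rightarrow> 0) | K3 \<Rightarrow> (case d of K0 \<Rightarrow> 0 | K1 \<Rightarrow> 0 | K2 \<Rightarrow> 0 | K3 \<Rightarrow> 0 | K4 \<Rightarrow> 0 | K6 \<Rightarrow> 0) | K4 \<Rightarrow> (case d of K0 \<Rightarrow> 0 | K1 \<Rightarrow> 0 | K2 \<Rightarrow> 0 | K3 \<Rightarrow> 0 | K4 \<Rightarrow> 0 | K6 \<Rightarrow> 0) | K6 \<Rightarrow> (case d of K0 \<Rightarrow> 0 | K1 \<Rightarrow> 0 | K2 \<Rightarrow> 0 | K3 \<Rightarrow> 0 | K4 \<Rightarrow> 0 | K6 \<Rightarrow> 0)) | K6 \<Rightarrow> (case c of K0 \<Rightarrow> (case d of K0 \<Rightarrow> 0 | K1 \<Rightarrow> 0 | K2 \<Rightarrow> 0 | K3 \<Rightarrow> 0 | K4 \<Rightarrow> 0 | K6 \<Rightarrow> 0) | K1 \<Rightarrow> (case d of K0 \<Rightarrow> 0 | K1 \<Rightarrow> 0 | K2 \<Rightarrow> 0 | K3 \<Rightarrow> 0 | K4 \<Rightarrow> 0 | K6 \<Rightarrow> 0) | K2 \<Rightarrow> (case d of K0 \<Rightarrow> 0 | K1 \<Rightarrow> 0 | K2 \<Rightarrow> 0 | K3 \<Rightarrow> 0 | K4 \<Rightarrow>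 0 | K6 \<Rightarrow> 0) | K3 \<Rightarrow> (case d of K0 \<Rightarrow> 0 | K1 \<Rightarrow> 0 | K2 \<Rightarrow> 0 | K3 \<Rightarrow> 0 | K4 \<Rightarrow> 0 | K6 \<Rightarrow> 0) | K4 \<Rightarrow> (case d of K0 \<Rightarrow> 0 | K1 \<Rightarrow> 0 | K2 \<Rightarrow> 0 | K3 \<Rightarrow> 0 | K4 \<Rightarrow> 0 | K6 \<Rightarrow> 0) | K6 \<Rightarrow> (case d of K0 \<Rightarrow> 0 | K1 \<Rightarrow> 0 | K2 \<Rightarrow> 0 | K3 \<Rightarrow> 0 | K4 \<Rightarrow> 0 | K6 \<Rightarrow> 0))) | K3 \<Rightarrow> (case b of K0 \<Rightarrow> (case c of K0 \<Rightarrow> (case d of K0 \<Rightarrow> (-13) | K1 \<Rightarrow> (-13) | K2 \<Rightarrow> (-13) | K3 \<Rightarrow> (-13) | K4 \<Rightarrow> (-23) | K6 \<Rightarrow> (-23)) | K1 \<Rightarrow> (case d of K0 \<Rightarrow> (-13) | K1 \<Rightarrow> (-13) | K2 \<Rightarrow> (-23) | K3 \<Rightarrow> (-23) | K4 \<Rightarrow> (-23) | K6 \<Rightarrow> (-23)) | K2 \<Rightarrow> (case d of K0 \<Rightarrow> (-23) | K1 \<Rightarrow> (-23) | K2 \<Rightarrow> (-23) | K3 \<Rightarrow> (-23) | K4 \<Rightarrow> (-23) | K6 \<Rightarrow> (-23)) | K3 \<Rightarrow> (case d of K0 \<Rightarrow> (-23) | K1 \<Rightarrow> (-23) | K2 \<Rightarrow>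 (-23) | K3 \<Rightarrow> (-23) | K4 \<Rightarrow> (-23) | K6 \<Rightarrow> (-23)) | K4 \<Rightarrow> (case d of K0 \<Rightarrow> (-23) | K1 \<Rightarrow> (-23) | K2 \<Rightarrow> (-23) | K3 \<Rightarrow> (-23) | K4 \<Rightarrow> (-23) | K6 \<Rightarrow> (-23)) | K6 \<Rightarrow> (case d of K0 \<Rightarrow> (-23) | K1 \<Rightarrow> (-23) | K2 \<Rightarrow> (-23) | K3 \<Rightarrow> (-23) | K4 \<Rightarrow> (-23) | K6 \<Rightarrow> (-23))) | K1 \<Rightarrow> (case c of K0 \<Rightarrow> (case d of K0 \<Rightarrow> (-11) | K1 \<Rightarrow> (-11) | K2 \<Rightarrow> (-11) | K3 \<Rightarrow> (-11) | K4 \<Rightarrow> (-11) | K6 \<Rightarrow> (-11)) | K1 \<Rightarrow> (case d of K0 \<Rightarrow> (-11) | K1 \<Rightarrow> (-11) | K2 \<Rightarrow> (-11) | K3 \<Rightarrow> (-11) | K4 \<Rightarrow> (-11) | K6 \<Rightarrow> (-11)) | K2 \<Rightarrow> (case d of K0 \<Rightarrow> (-11) | K1 \<Rightarrow> (-11) | K2 \<Rightarrow> (-11) | K3 \<Rightarrow> (-11) | K4 \<Rightarrow> (-11) | K6 \<Rightarrow> (-11)) | K3 \<Rightarrow> (case d of K0 \<Rightarrow> (-11) | K1 \<Rightarrow> (-11) | K2 \<Rightarrow> (-11) | K3 \<Rightarrow> (-11) | K4 \<Rightarrow> (-11) | K6 \<Rightarrow> (-11)) | K4 \<Rightarrow>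 (case d of K0 \<Rightarrow> (-11) | K1 \<Rightarrow> (-11) | K2 \<Rightarrow> (-11) | K3 \<Rightarrow> (-11) | K4 \<Rightarrow> (-11) | K6 \<Rightarrow> (-11)) | K6 \<Rightarrow> (case d of K0 \<Rightarrow> (-11) | K1 \<Rightarrow> (-11) | K2 \<Rightarrow> (-11) | K3 \<Rightarrow> (-11) | K4 \<Rightarrow> (-11) | K6 \<Rightarrow> (-11))) | K2 \<Rightarrow> (case c of K0 \<Rightarrow> (case d of K0 \<Rightarrow> 0 | K1 \<Rightarrow> 0 | K2 \<Rightarrow> 0 | K3 \<Rightarrow> 0 | K4 \<Rightarrow> 0 | K6 \<Rightarrow> 0) | K1 \<Rightarrow> (case d of K0 \<Rightarrow> 0 | K1 \<Rightarrow> 0 | K2 \<Rightarrow> 0 | K3 \<Rightarrow> 0 | K4 \<Rightarrow> 0 | K6 \<Rightarrow> 0) | K2 \<Rightarrow> (case d of K0 \<Rightarrow> 0 | K1 \<Rightarrow> 0 | K2 \<Rightarrow> 0 | K3 \<Rightarrow> 0 | K4 \<Rightarrow> 0 | K6 \<Rightarrow> 0) | K3 \<Rightarrow> (case d of K0 \<Rightarrow> 0 | K1 \<Rightarrow> 0 | K2 \<Rightarrow> 0 | K3 \<Rightarrow> 0 | K4 \<Rightarrow> 0 | K6 \<Rightarrow> 0) | K4 \<Rightarrow> (case d of K0 \<Rightarrow> 0 | K1 \<Rightarrow> 0 | K2 \<Rightarrow> 0 | K3 \<Rightarrow> 0 | K4 \<Rightarrow> 0 | K6 \<Rightarrow> 0)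 | K6 \<Rightarrow> (case d of K0 \<Rightarrow> 0 | K1 \<Rightarrow> 0 | K2 \<Rightarrow> 0 | K3 \<Rightarrow> 0 | K4 \<Rightarrow> 0 | K6 \<Rightarrow> 0)) | K3 \<Rightarrow> (case c of K0 \<Rightarrow> (case d of K0 \<Rightarrow> 0 | K1 \<Rightarrow> 0 | K2 \<Rightarrow> 0 | K3 \<Rightarrow> 0 | K4 \<Rightarrow> 0 | K6 \<Rightarrow> 0) | K1 \<Rightarrow> (case d of K0 \<Rightarrow> 0 | K1 \<Rightarrow> 0 | K2 \<Rightarrow> 0 | K3 \<Rightarrow> 0 | K4 \<Rightarrow> 0 | K6 \<Rightarrow> 0) | K2 \<Rightarrow> (case d of K0 \<Rightarrow> 0 | K1 \<Rightarrow> 0 | K2 \<Rightarrow> 0 | K3 \<Rightarrow> 0 | K4 \<Rightarrow> 0 | K6 \<Rightarrow> 0) | K3 \<Rightarrow> (case d of K0 \<Rightarrow> 0 | K1 \<Rightarrow> 0 | K2 \<Rightarrow> 0 | K3 \<Rightarrow> 0 | K4 \<Rightarrow> 0 | K6 \<Rightarrow> 0) | K4 \<Rightarrow> (case d of K0 \<Rightarrow> 0 | K1 \<Rightarrow> 0 | K2 \<Rightarrow> 0 | K3 \<Rightarrow> 0 | K4 \<Rightarrow> 0 | K6 \<Rightarrow> 0) | K6 \<Rightarrow> (case d of K0 \<Rightarrow> 0 | K1 \<Rightarrow> 0 | K2 \<Rightarrow> 0 | K3 \<Rightarrow> 0 | K4 \<Rightarrow> 0 | K6 \<Rightarrow> 0))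 | K4 \<Rightarrow> (case c of K0 \<Rightarrow> (case d of K0 \<Rightarrow> 0 | K1 \<Rightarrow> 0 | K2 \<Rightarrow> 0 | K3 \<Rightarrow> 0 | K4 \<Rightarrow> 0 | K6 \<Rightarrow> 0) | K1 \<Rightarrow> (case d of K0 \<Rightarrow> 0 | K1 \<Rightarrow> 0 | K2 \<Rightarrow> 0 | K3 \<Rightarrow> 0 | K4 \<Rightarrow> 0 | K6 \<Rightarrow> 0) | K2 \<Rightarrow> (case d of K0 \<Rightarrow> 0 | K1 \<Rightarrow> 0 | K2 \<Rightarrow> 0 | K3 \<Rightarrow> 0 | K4 \<Rightarrow> 0 | K6 \<Rightarrow> 0) | K3 \<Rightarrow> (case d of K0 \<Rightarrow> 0 | K1 \<Rightarrow> 0 | K2 \<Rightarrow> 0 | K3 \<Rightarrow> 0 | K4 \<Rightarrow> 0 | K6 \<Rightarrow> 0) | K4 \<Rightarrow> (case d of K0 \<Rightarrow> 0 | K1 \<Rightarrow> 0 | K2 \<Rightarrow> 0 | K3 \<Rightarrow> 0 | K4 \<Rightarrow> 0 | K6 \<Rightarrow> 0) | K6 \<Rightarrow> (case d of K0 \<Rightarrow> 0 | K1 \<Rightarrow> 0 | K2 \<Rightarrow> 0 | K3 \<Rightarrow> 0 | K4 \<Rightarrow> 0 | K6 \<Rightarrow> 0)) | K6 \<Rightarrow> (case c of K0 \<Rightarrow> (case d of K0 \<Rightarrow> 0 | K1 \<Rightarrow> 0 | K2 \<Rightarrow> 0 | K3 \<Rightarrow> 0 | K4 \<Rightarrow> 0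 | K6 \<Rightarrow> 0) | K1 \<Rightarrow> (case d of K0 \<Rightarrow> 0 | K1 \<Rightarrow> 0 | K2 \<Rightarrow> 0 | K3 \<Rightarrow> 0 | K4 \<Rightarrow> 0 | K6 \<Rightarrow> 0) | K2 \<Rightarrow> (case d of K0 \<Rightarrow> 0 | K1 \<Rightarrow> 0 | K2 \<Rightarrow> 0 | K3 \<Rightarrow> 0 | K4 \<Rightarrow> 0 | K6 \<Rightarrow> 0) | K3 \<Rightarrow> (case d of K0 \<Rightarrow> 0 | K1 \<Rightarrow> 0 | K2 \<Rightarrow> 0 | K3 \<Rightarrow> 0 | K4 \<Rightarrow> 0 | K6 \<Rightarrow> 0) | K4 \<Rightarrow> (case d of K0 \<Rightarrow> 0 | K1 \<Rightarrow> 0 | K2 \<Rightarrow> 0 | K3 \<Rightarrow> 0 | K4 \<Rightarrow> 0 | K6 \<Rightarrow> 0) | K6 \<Rightarrow> (case d of K0 \<Rightarrow> 0 | K1 \<Rightarrow> 0 | K2 \<Rightarrow> 0 | K3 \<Rightarrow> 0 | K4 \<Rightarrow> 0 | K6 \<Rightarrow> 0))) | K4 \<Rightarrow> (case b of K0 \<Rightarrow> (case c of K0 \<Rightarrow> (case d of K0 \<Rightarrow> (-17) | K1 \<Rightarrow> (-17) | K2 \<Rightarrow> (-17) | K3 \<Rightarrow> (-17) | K4 \<Rightarrow> (-17) | K6 \<Rightarrow> (-17)) | K1 \<Rightarrow> (case d of K0 \<Rightarrow> (-17) | K1 \<Rightarrow> (-17) | K2 \<Rightarrow> (-17) | K3 \<Rightarrow>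 (-17) | K4 \<Rightarrow> (-17) | K6 \<Rightarrow> (-17)) | K2 \<Rightarrow> (case d of K0 \<Rightarrow> (-17) | K1 \<Rightarrow> (-17) | K2 \<Rightarrow> (-17) | K3 \<Rightarrow> (-17) | K4 \<Rightarrow> (-17) | K6 \<Rightarrow> (-17)) | K3 \<Rightarrow> (case d of K0 \<Rightarrow> (-17) | K1 \<Rightarrow> (-17) | K2 \<Rightarrow> (-17) | K3 \<Rightarrow> (-17) | K4 \<Rightarrow> (-17) | K6 \<Rightarrow> (-17)) | K4 \<Rightarrow> (case d of K0 \<Rightarrow> (-17) | K1 \<Rightarrow> (-17) | K2 \<Rightarrow> (-17) | K3 \<Rightarrow> (-17) | K4 \<Rightarrow> (-17) | K6 \<Rightarrow> (-17)) | K6 \<Rightarrow> (case d of K0 \<Rightarrow> (-17) | K1 \<Rightarrow> (-17) | K2 \<Rightarrow> (-17) | K3 \<Rightarrow> (-17) | K4 \<Rightarrow> (-17) | K6 \<Rightarrow> (-17))) | K1 \<Rightarrow> (case c of K0 \<Rightarrow> (case d of K0 \<Rightarrow> (-5) | K1 \<Rightarrow> (-5) | K2 \<Rightarrow> (-5) | K3 \<Rightarrow> (-5) | K4 \<Rightarrow> (-5) | K6 \<Rightarrow> (-5)) | K1 \<Rightarrow> (case d of K0 \<Rightarrow> (-5) | K1 \<Rightarrow> (-5) | K2 \<Rightarrow> (-5) | K3 \<Rightarrow> (-5) | K4 \<Rightarrow> (-5) | K6 \<Rightarrow> (-5)) | K2 \<Rightarrow> (case d of K0 \<Rightarrow> (-5)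 | K1 \<Rightarrow> (-5) | K2 \<Rightarrow> (-5) | K3 \<Rightarrow> (-5) | K4 \<Rightarrow> (-5) | K6 \<Rightarrow> (-5)) | K3 \<Rightarrow> (case d of K0 \<Rightarrow> (-5) | K1 \<Rightarrow> (-5) | K2 \<Rightarrow> (-5) | K3 \<Rightarrow> (-5) | K4 \<Rightarrow> (-5) | K6 \<Rightarrow> (-5)) | K4 \<Rightarrow> (case d of K0 \<Rightarrow> (-5) | K1 \<Rightarrow> (-5) | K2 \<Rightarrow> (-5) | K3 \<Rightarrow> (-5) | K4 \<Rightarrow> (-5) | K6 \<Rightarrow> (-5)) | K6 \<Rightarrow> (case d of K0 \<Rightarrow> (-5) | K1 \<Rightarrow> (-5) | K2 \<Rightarrow> (-5) | K3 \<Rightarrow> (-5) | K4 \<Rightarrow> (-5) | K6 \<Rightarrow> (-5))) | K2 \<Rightarrow> (case c of K0 \<Rightarrow> (case d of K0 \<Rightarrow> 0 | K1 \<Rightarrow> 0 | K2 \<Rightarrow> 0 | K3 \<Rightarrow> 0 | K4 \<Rightarrow> 0 | K6 \<Rightarrow> 0) | K1 \<Rightarrow> (case d of K0 \<Rightarrow> 0 | K1 \<Rightarrow> 0 | K2 \<Rightarrow> 0 | K3 \<Rightarrow> 0 | K4 \<Rightarrow> 0 | K6 \<Rightarrow> 0) | K2 \<Rightarrow> (case d of K0 \<Rightarrow> 0 | K1 \<Rightarrow> 0 | K2 \<Rightarrow> 0 | K3 \<Rightarrow> 0 | K4 \<Rightarrow> 0 | K6 \<Rightarrow> 0) | K3 \<Rightarrow>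 (case d of K0 \<Rightarrow> 0 | K1 \<Rightarrow> 0 | K2 \<Rightarrow> 0 | K3 \<Rightarrow> 0 | K4 \<Rightarrow> 0 | K6 \<Rightarrow> 0) | K4 \<Rightarrow> (case d of K0 \<Rightarrow> 0 | K1 \<Rightarrow> 0 | K2 \<Rightarrow> 0 | K3 \<Rightarrow> 0 | K4 \<Rightarrow> 0 | K6 \<Rightarrow> 0) | K6 \<Rightarrow> (case d of K0 \<Rightarrow> 0 | K1 \<Rightarrow> 0 | K2 \<Rightarrow> 0 | K3 \<Rightarrow> 0 | K4 \<Rightarrow> 0 | K6 \<Rightarrow> 0)) | K3 \<Rightarrow> (case c of K0 \<Rightarrow> (case d of K0 \<Rightarrow> 0 | K1 \<Rightarrow> 0 | K2 \<Rightarrow> 0 | K3 \<Rightarrow> 0 | K4 \<Rightarrow> 0 | K6 \<Rightarrow> 0) | K1 \<Rightarrow> (case d of K0 \<Rightarrow> 0 | K1 \<Rightarrow> 0 | K2 \<Rightarrow> 0 | K3 \<Rightarrow> 0 | K4 \<Rightarrow> 0 | K6 \<Rightarrow> 0) | K2 \<Rightarrow> (case d of K0 \<Rightarrow> 0 | K1 \<Rightarrow> 0 | K2 \<Rightarrow> 0 | K3 \<Rightarrow> 0 | K4 \<Rightarrow> 0 | K6 \<Rightarrow> 0) | K3 \<Rightarrow> (case d of K0 \<Rightarrow> 0 | K1 \<Rightarrow> 0 | K2 \<Rightarrow> 0 | K3 \<Rightarrow> 0 | K4 \<Rightarrow> 0 | K6 \<Rightarrow> 0) | K4 \<Rightarrow>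 (case d of K0 \<Rightarrow> 0 | K1 \<Rightarrow> 0 | K2 \<Rightarrow> 0 | K3 \<Rightarrow> 0 | K4 \<Rightarrow> 0 | K6 \<Rightarrow> 0) | K6 \<Rightarrow> (case d of K0 \<Rightarrow> 0 | K1 \<Rightarrow> 0 | K2 \<Rightarrow> 0 | K3 \<Rightarrow> 0 | K4 \<Rightarrow> 0 | K6 \<Rightarrow> 0)) | K4 \<Rightarrow> (case c of K0 \<Rightarrow> (case d of K0 \<Rightarrow> 0 | K1 \<Rightarrow> 0 | K2 \<Rightarrow> 0 | K3 \<Rightarrow> 0 | K4 \<Rightarrow> 0 | K6 \<Rightarrow> 0) | K1 \<Rightarrow> (case d of K0 \<Rightarrow> 0 | K1 \<Rightarrow> 0 | K2 \<Rightarrow> 0 | K3 \<Rightarrow> 0 | K4 \<Rightarrow> 0 | K6 \<Rightarrow> 0) | K2 \<Rightarrow> (case d of K0 \<Rightarrow> 0 | K1 \<Rightarrow> 0 | K2 \<Rightarrow> 0 | K3 \<Rightarrow> 0 | K4 \<Rightarrow> 0 | K6 \<Rightarrow> 0) | K3 \<Rightarrow> (case d of K0 \<Rightarrow> 0 | K1 \<Rightarrow> 0 | K2 \<Rightarrow> 0 | K3 \<Rightarrow> 0 | K4 \<Rightarrow> 0 | K6 \<Rightarrow> 0) | K4 \<Rightarrow> (case d of K0 \<Rightarrow> 0 | K1 \<Rightarrow> 0 | K2 \<Rightarrow> 0 | K3 \<Rightarrow> 0 | K4 \<Rightarrow> 0 | K6 \<Rightarrow> 0) | K6 \<Rightarrow>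 (case d of K0 \<Rightarrow> 0 | K1 \<Rightarrow> 0 | K2 \<Rightarrow> 0 | K3 \<Rightarrow> 0 | K4 \<Rightarrow> 0 | K6 \<Rightarrow> 0)) | K6 \<Rightarrow> (case c of K0 \<Rightarrow> (case d of K0 \<Rightarrow> 0 | K1 \<Rightarrow> 0 | K2 \<Rightarrow> 0 | K3 \<Rightarrow> 0 | K4 \<Rightarrow> 0 | K6 \<Rightarrow> 0) | K1 \<Rightarrow> (case d of K0 \<Rightarrow> 0 | K1 \<Rightarrow> 0 | K2 \<Rightarrow> 0 | K3 \<Rightarrow> 0 | K4 \<Rightarrow> 0 | K6 \<Rightarrow> 0) | K2 \<Rightarrow> (case d of K0 \<Rightarrow> 0 | K1 \<Rightarrow> 0 | K2 \<Rightarrow> 0 | K3 \<Rightarrow> 0 | K4 \<Rightarrow> 0 | K6 \<Rightarrow> 0) | K3 \<Rightarrow> (case d of K0 \<Rightarrow> 0 | K1 \<Rightarrow> 0 | K2 \<Rightarrow> 0 | K3 \<Rightarrow> 0 | K4 \<Rightarrow> 0 | K6 \<Rightarrow> 0) | K4 \<Rightarrow> (case d of K0 \<Rightarrow> 0 | K1 \<Rightarrow> 0 | K2 \<Rightarrow> 0 | K3 \<Rightarrow> 0 | K4 \<Rightarrow> 0 | K6 \<Rightarrow> 0) | K6 \<Rightarrow> (case d of K0 \<Rightarrow> 0 | K1 \<Rightarrow> 0 | K2 \<Rightarrow> 0 | K3 \<Rightarrow> 0 | K4 \<Rightarrow> 0 | K6 \<Rightarrow> 0))) | K6 \<Rightarrow>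 (case b of K0 \<Rightarrow> (case c of K0 \<Rightarrow> (case d of K0 \<Rightarrow> (-13) | K1 \<Rightarrow> (-13) | K2 \<Rightarrow> (-13) | K3 \<Rightarrow> (-13) | K4 \<Rightarrow> (-13) | K6 \<Rightarrow> (-13)) | K1 \<Rightarrow> (case d of K0 \<Rightarrow> (-13) | K1 \<Rightarrow> (-13) | K2 \<Rightarrow> (-13) | K3 \<Rightarrow> (-13) | K4 \<Rightarrow> (-13) | K6 \<Rightarrow> (-13)) | K2 \<Rightarrow> (case d of K0 \<Rightarrow> (-13) | K1 \<Rightarrow> (-13) | K2 \<Rightarrow> (-13) | K3 \<Rightarrow> (-13) | K4 \<Rightarrow> (-13) | K6 \<Rightarrow> (-13)) | K3 \<Rightarrow> (case d of K0 \<Rightarrow> (-13) | K1 \<Rightarrow> (-13) | K2 \<Rightarrow> (-13) | K3 \<Rightarrow> (-13) | K4 \<Rightarrow> (-13) | K6 \<Rightarrow> (-13)) | K4 \<Rightarrow> (case d of K0 \<Rightarrow> (-13) | K1 \<Rightarrow> (-13) | K2 \<Rightarrow> (-13) | K3 \<Rightarrow> (-13) | K4 \<Rightarrow> (-13) | K6 \<Rightarrow> (-13)) | K6 \<Rightarrow> (case d of K0 \<Rightarrow> (-13) | K1 \<Rightarrow> (-13) | K2 \<Rightarrow> (-13) | K3 \<Rightarrow> (-13) | K4 \<Rightarrow> (-13) | K6 \<Rightarrow> (-13))) | K1 \<Rightarrow> (case c of K0 \<Rightarrow> (case d of K0 \<Rightarrow> (-1) | K1 \<Rightarrow> (-1)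 | K2 \<Rightarrow> (-1) | K3 \<Rightarrow> (-1) | K4 \<Rightarrow> (-1) | K6 \<Rightarrow> (-1)) | K1 \<Rightarrow> (case d of K0 \<Rightarrow> (-1) | K1 \<Rightarrow> (-1) | K2 \<Rightarrow> (-1) | K3 \<Rightarrow> (-1) | K4 \<Rightarrow> (-1) | K6 \<Rightarrow> (-1)) | K2 \<Rightarrow> (case d of K0 \<Rightarrow> (-1) | K1 \<Rightarrow> (-1) | K2 \<Rightarrow> (-1) | K3 \<Rightarrow> (-1) | K4 \<Rightarrow> (-1) | K6 \<Rightarrow> (-1)) | K3 \<Rightarrow> (case d of K0 \<Rightarrow> (-1) | K1 \<Rightarrow> (-1) | K2 \<Rightarrow> (-1) | K3 \<Rightarrow> (-1) | K4 \<Rightarrow> (-1) | K6 \<Rightarrow> (-1)) | K4 \<Rightarrow> (case d of K0 \<Rightarrow> (-1) | K1 \<Rightarrow> (-1) | K2 \<Rightarrow> (-1) | K3 \<Rightarrow> (-1) | K4 \<Rightarrow> (-1) | K6 \<Rightarrow> (-1)) | K6 \<Rightarrow> (case d of K0 \<Rightarrow> (-1) | K1 \<Rightarrow> (-1) | K2 \<Rightarrow> (-1) | K3 \<Rightarrow> (-1) | K4 \<Rightarrow> (-1) | K6 \<Rightarrow> (-1))) | K2 \<Rightarrow> (case c of K0 \<Rightarrow> (case d of K0 \<Rightarrow> 0 | K1 \<Rightarrow> 0 | K2 \<Rightarrow> 0 | K3 \<Rightarrow> 0 | K4 \<Rightarrow> 0 | K6 \<Rightarrow> 0) | K1 \<Rightarrow>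 (case d of K0 \<Rightarrow> 0 | K1 \<Rightarrow> 0 | K2 \<Rightarrow> 0 | K3 \<Rightarrow> 0 | K4 \<Rightarrow> 0 | K6 \<Rightarrow> 0) | K2 \<Rightarrow> (case d of K0 \<Rightarrow> 0 | K1 \<Rightarrow> 0 | K2 \<Rightarrow> 0 | K3 \<Rightarrow> 0 | K4 \<Rightarrow> 0 | K6 \<Rightarrow> 0) | K3 \<Rightarrow> (case d of K0 \<Rightarrow> 0 | K1 \<Rightarrow> 0 | K2 \<Rightarrow> 0 | K3 \<Rightarrow> 0 | K4 \<Rightarrow> 0 | K6 \<Rightarrow> 0) | K4 \<Rightarrow> (case d of K0 \<Rightarrow> 0 | K1 \<Rightarrow> 0 | K2 \<Rightarrow> 0 | K3 \<Rightarrow> 0 | K4 \<Rightarrow> 0 | K6 \<Rightarrow> 0) | K6 \<Rightarrow> (case d of K0 \<Rightarrow> 0 | K1 \<Rightarrow> 0 | K2 \<Rightarrow> 0 | K3 \<Rightarrow> 0 | K4 \<Rightarrow> 0 | K6 \<Rightarrow> 0)) | K3 \<Rightarrow> (case c of K0 \<Rightarrow> (case d of K0 \<Rightarrow> 0 | K1 \<Rightarrow> 0 | K2 \<Rightarrow> 0 | K3 \<Rightarrow> 0 | K4 \<Rightarrow> 0 | K6 \<Rightarrow> 0) | K1 \<Rightarrow> (case d of K0 \<Rightarrow> 0 | K1 \<Rightarrow> 0 | K2 \<Rightarrow> 0 | K3 \<Rightarrow> 0 | K4 \<Rightarrow> 0 | K6 \<Rightarrow> 0) | K2 \<Rightarrow>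 (case d of K0 \<Rightarrow> 0 | K1 \<Rightarrow> 0 | K2 \<Rightarrow> 0 | K3 \<Rightarrow> 0 | K4 \<Rightarrow> 0 | K6 \<Rightarrow> 0) | K3 \<Rightarrow> (case d of K0 \<Rightarrow> 0 | K1 \<Rightarrow> 0 | K2 \<Rightarrow> 0 | K3 \<Rightarrow> 0 | K4 \<Rightarrow> 0 | K6 \<Rightarrow> 0) | K4 \<Rightarrow> (case d of K0 \<Rightarrow> 0 | K1 \<Rightarrow> 0 | K2 \<Rightarrow> 0 | K3 \<Rightarrow> 0 | K4 \<Rightarrow> 0 | K6 \<Rightarrow> 0) | K6 \<Rightarrow> (case d of K0 \<Rightarrow> 0 | K1 \<Rightarrow> 0 | K2 \<Rightarrow> 0 | K3 \<Rightarrow> 0 | K4 \<Rightarrow> 0 | K6 \<Rightarrow> 0)) | K4 \<Rightarrow> (case c of K0 \<Rightarrow> (case d of K0 \<Rightarrow> 0 | K1 \<Rightarrow> 0 | K2 \<Rightarrow> 0 | K3 \<Rightarrow> 0 | K4 \<Rightarrow> 0 | K6 \<Rightarrow> 0) | K1 \<Rightarrow> (case d of K0 \<Rightarrow> 0 | K1 \<Rightarrow> 0 | K2 \<Rightarrow> 0 | K3 \<Rightarrow> 0 | K4 \<Rightarrow> 0 | K6 \<Rightarrow> 0) | K2 \<Rightarrow> (case d of K0 \<Rightarrow> 0 | K1 \<Rightarrow> 0 | K2 \<Rightarrow> 0 | K3 \<Rightarrow> 0 | K4 \<Rightarrow> 0 | K6 \<Rightarrow> 0) | K3 \<Rightarrow>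 (case d of K0 \<Rightarrow> 0 | K1 \<Rightarrow> 0 | K2 \<Rightarrow> 0 | K3 \<Rightarrow> 0 | K4 \<Rightarrow> 0 | K6 \<Rightarrow> 0) | K4 \<Rightarrow> (case d of K0 \<Rightarrow> 0 | K1 \<Rightarrow> 0 | K2 \<Rightarrow> 0 | K3 \<Rightarrow> 0 | K4 \<Rightarrow> 0 | K6 \<Rightarrow> 0) | K6 \<Rightarrow> (case d of K0 \<Rightarrow> 0 | K1 \<Rightarrow> 0 | K2 \<Rightarrow> 0 | K3 \<Rightarrow> 0 | K4 \<Rightarrow> 0 | K6 \<Rightarrow> 0)) | K6 \<Rightarrow> (case c of K0 \<Rightarrow> (case d of K0 \<Rightarrow> 0 | K1 \<Rightarrow> 0 | K2 \<Rightarrow> 0 | K3 \<Rightarrow> 0 | K4 \<Rightarrow> 0 | K6 \<Rightarrow> 0) | K1 \<Rightarrow> (case d of K0 \<Rightarrow> 0 | K1 \<Rightarrow> 0 | K2 \<Rightarrow> 0 | K3 \<Rightarrow> 0 | K4 \<Rightarrow> 0 | K6 \<Rightarrow> 0) | K2 \<Rightarrow> (case d of K0 \<Rightarrow> 0 | K1 \<Rightarrow> 0 | K2 \<Rightarrow> 0 | K3 \<Rightarrow> 0 | K4 \<Rightarrow> 0 | K6 \<Rightarrow> 0) | K3 \<Rightarrow> (case d of K0 \<Rightarrow> 0 | K1 \<Rightarrow> 0 | K2 \<Rightarrow> 0 | K3 \<Rightarrow> 0 | K4 \<Rightarrow> 0 | K6 \<Rightarrow> 0) | K4 \<Rightarrow>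 (case d of K0 \<Rightarrow> 0 | K1 \<Rightarrow> 0 | K2 \<Rightarrow> 0 | K3 \<Rightarrow> 0 | K4 \<Rightarrow> 0 | K6 \<Rightarrow> 0) | K6 \<Rightarrow> (case d of K0 \<Rightarrow> 0 | K1 \<Rightarrow> 0 | K2 \<Rightarrow> 0 | K3 \<Rightarrow> 0 | K4 \<Rightarrow> 0 | K6 \<Rightarrow> 0))))"

definition cov :: "cat \<Rightarrow> cat \<Rightarrow> cat \<Rightarrow> cat \<Rightarrow> cat \<Rightarrow> bool" where
 "cov a b c d e = (6 \<le> Hf a + Bf b + Af c + Bf d + Hf e)"
definition spec :: "cat \<Rightarrow> cat \<Rightarrow> cat \<Rightarrow> cat \<Rightarrow> cat \<Rightarrow> bool" where
 "spec a b c d e = ((a,b,c,d,e) = (K2,K0,K2,K0,K2) \<or> (a,b,c,d,e) = (K0,K2,K0,K2,K0))"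
definition wok :: "cat \<Rightarrow> cat \<Rightarrow> cat \<Rightarrow> cat \<Rightarrow> cat \<Rightarrow> bool" where
 "wok a b c d e = (cov a b c d e \<longrightarrow> phi b c d e - phi a b c d \<le> 12 * (int (cv c) - 1) - (if spec a b c d e then 0 else 1))"

lemma chk_K0: "wok K0 b c d e"
  apply (induct b; induct c; induct d; induct e)
  apply (simp_all add: wok_def cov_def spec_def phi_def)
  done

lemma chk_K1: "wok K1 b c d e"
  apply (induct b; induct c; induct d; induct e)
  apply (simp_all add: wok_def cov_def spec_def phi_def)
  done

lemma chk_K2: "wok K2 b c d e"
  apply (induct b; induct c; induct d; induct e)
  apply (simp_all add: wok_def cov_def spec_def phi_def)
  done

lemma chk_K3: "wok K3 b c d e"
  apply (induct b; induct c; induct d; induct e)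
  apply (simp_all add: wok_def cov_def spec_def phi_def)
  done

lemma chk_K4: "wok K4 b c d e"
  apply (induct b; induct c; induct d; induct e)
  apply (simp_all add: wok_def cov_def spec_def phi_def)
  done

lemma chk_K6: "wok K6 b c d e"
  apply (induct b; induct c; induct d; induct e)
  apply (simp_all add: wok_def cov_def spec_def phi_def)
  done

lemma chk: "wok a b c d e"
  by (cases a) (simp_all add: chk_K0 chk_K1 chk_K2 chk_K3 chk_K4 chk_K6)




definition catf :: "nat \<Rightarrow> cat" where
  "catf c = (if c = 0 then K0 else if c = 1 then K1 else if c = 2 then K2 else if c = 3 then K3
             else if c \<le> 5 then K4 else K6)"

lemma catf_props: "cv (catf c) \<le> c" "min 6 (3*c) \<le> Af (catf c)" "min 6 (3*c div 2) \<le> Bf (catf c)"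
  "min 6 (c div 2) \<le> Hf (catf c)"
proof -
  consider "c = 0" | "c = 1" | "c = 2" | "c = 3" | "c = 4" | "c = 5" | "6 \<le> c" by arith
  then have "cv (catf c) \<le> c \<and> min 6 (3*c) \<le> Af (catf c) \<and> min 6 (3*c div 2) \<le> Bf (catf c) \<and>
    min 6 (c div 2) \<le> Hf (catf c)"
    by cases (auto simp: catf_def)
  then show "cv (catf c) \<le> c" "min 6 (3*c) \<le> Af (catf c)" "min 6 (3*c div 2) \<le> Bf (catf c)"
    "min 6 (c div 2) \<le> Hf (catf c)" by auto
qed

lemma cov_catf:
  assumes "6 \<le> 3*c + 3*d div 2 + e div 2 + a div 2 + 3*b div 2"
  shows "cov (catf a) (catf b) (catf c) (catf d) (catf e)"
proof -
  have h: "min 6 (a div 2) \<le> Hf (catf a)" "min 6 (3*b div 2) \<le> Bf (catf b)" "min 6 (3*c) \<le> Af (catf c)"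
    "min 6 (3*d div 2) \<le> Bf (catf d)" "min 6 (e div 2) \<le> Hf (catf e)" using catf_props by auto
  show ?thesis unfolding cov_def using h assms by (simp add: min_def split: if_splits)
qed

lemma modn_shift: "(x + n + k) mod n = (x + k) mod (n::nat)"
proof -
  have "x + n + k = (x + k) + n" by simp
  then show ?thesis by (simp only: mod_add_self2)
qed

lemma lower_main:
  assumes n: "6 \<le> n" and dom: "dom_broadcast2 (torus_V 6 n) (torus_E 6 n) f"
  defines "K \<equiv> (\<lambda>x. catf (colc f (x mod n)))"
  shows "12 * int n + (\<Sum>j<n. if spec (K (j+n-2)) (K (j+n-1)) (K (j+n)) (K (j+n+1)) (K (j+n+2)) then 0 else 1)
         \<le> 12 * int (bcost (torus_V 6 n) f)"
proof -
  define ph where "ph j = phi (K (j+n-2)) (K (j+n-1)) (K (j+n)) (K (j+n+1))" for j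
  define ns where "ns j = (if spec (K (j+n-2)) (K (j+n-1)) (K (j+n)) (K (j+n+1)) (K (j+n+2)) then 0 else 1::int)" for j
  have Kper: "K (x + n) = K x" for x unfolding K_def by simp
  have step: "ph (Suc j) - ph j \<le> 12 * (int (cv (K (j+n))) - 1) - ns j" if j: "j < n" for j
  proof -
    have e1: "Suc j + n - 2 = j + n - 1" "Suc j + n - 1 = j + n" "Suc j + n = j + n + 1" "Suc j + n + 1 = j + n + 2"
      using n by auto
    have "6 \<le> 3 * colc f j + 3 * colc f ((j + 1) mod n) div 2 + colc f ((j + 2) mod n) div 2
            + colc f ((j + (n - 2)) mod n) div 2 + 3 * colc f ((j + (n - 1)) mod n) div 2"
      by (rule col_ineq[OF n dom j])
    moreover have "(j + (n - 2)) = j + n - 2" "(j + (n - 1)) = j + n - 1" using n by auto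
    moreover have "(j + n) mod n = j" "(j + n + 1) mod n = (j + 1) mod n" "(j + n + 2) mod n = (j + 2) mod n"
      using j modn_shift[of j n 1] modn_shift[of j n 2] by simp_all
    ultimately have c: "cov (K (j+n-2)) (K (j+n-1)) (K (j+n)) (K (j+n+1)) (K (j+n+2))"
      unfolding K_def by (intro cov_catf) simp
    have "wok (K (j+n-2)) (K (j+n-1)) (K (j+n)) (K (j+n+1)) (K (j+n+2))" by (rule chk)
    then show ?thesis using c unfolding wok_def ph_def ns_def e1 by simp
  qed
  have "0 = ph n - ph 0"
  proof -
    have q1: "n + n - 2 = (n - 2) + n" and q2: "n + n - 1 = (n - 1) + n" and q3: "n + n + 1 = (n + 1) + n"
      using n by auto
    have "K (n + n - 2) = K (n - 2)" by (subst q1) (rule Kper)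
    moreover have "K (n + n - 1) = K (n - 1)" by (subst q2) (rule Kper)
    moreover have "K (n + n + 1) = K (n + 1)" by (subst q3) (rule Kper)
    moreover have "K (n + n) = K n" by (rule Kper)
    ultimately show ?thesis unfolding ph_def by simp
  qed
  also have "\<dots> = (\<Sum>j<n. ph (Suc j) - ph j)" by (rule sum_lessThan_telescope[symmetric])
  also have "\<dots> \<le> (\<Sum>j<n. 12 * (int (cv (K (j+n))) - 1) - ns j)" by (rule sum_mono) (use step in simp)
  also have "\<dots> = 12 * (\<Sum>j<n. int (cv (K (j+n)))) - 12 * int n - (\<Sum>j<n. ns j)"
    by (simp add: sum_subtractf sum_distrib_left algebra_simps sum.distrib)
  also have "(\<Sum>j<n. int (cv (K (j+n)))) \<le> (\<Sum>j<n. int (colc f j))"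
  proof (rule sum_mono)
    fix j assume "j \<in> {..<n}"
    then have "(j + n) mod n = j" by simp
    then show "int (cv (K (j+n))) \<le> int (colc f j)" unfolding K_def using catf_props(1) by simp
  qed
  also have "(\<Sum>j<n. int (colc f j)) = int (bcost (torus_V 6 n) f)"
    unfolding bcost_torus colc_def by simp
  finally show ?thesis unfolding ns_def by simp
qed




lemma all6: "(\<forall>i<(6::nat). P i) \<longleftrightarrow> P 0 \<and> P 1 \<and> P 2 \<and> P 3 \<and> P 4 \<and> P 5"
proof
  assume "\<forall>i<(6::nat). P i" then show "P 0 \<and> P 1 \<and> P 2 \<and> P 3 \<and> P 4 \<and> P 5" by simp
next
  assume "P 0 \<and> P 1 \<and> P 2 \<and> P 3 \<and> P 4 \<and> P 5" then show "\<forall>i<(6::nat). P i"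
    using less6 by metis
qed

lemma rows_opp:
  assumes r: "r < 6" and s: "s < 6" and h: "\<forall>i<6. near 6 1 i r \<or> near 6 1 i s"
  shows "s = (r + 3) mod 6"
  using less6[OF r] less6[OF s] h unfolding all6
  by (elim disjE) (simp_all add: near_Suc[of _ 0, simplified] near_0)

lemma colc_zero: "colc f j = 0 \<Longrightarrow> i < 6 \<Longrightarrow> f (i,j) = 0"
  unfolding colc_def by simp

lemma heavy_G:
  assumes x: "\<And>i. i < 6 \<Longrightarrow> f (i, j) \<le> 2" and c: "colc f j = 2"
  shows "(\<Sum>i<6. G 1 (f (i, j))) \<le> 3"
    and "(\<Sum>i<6. G 1 (f (i, j))) = 3 \<Longrightarrow> \<exists>r<6. f (r,j) = 2 \<and> (\<forall>i<6. i \<noteq> r \<longrightarrow> f (i,j) = 0)"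
proof -
  have "(\<Sum>i<6. 2 * G 1 (f (i, j))) \<le> (\<Sum>i<6. 3 * f (i, j))"
  proof (rule sum_mono)
    fix i assume "i \<in> {..<6::nat}" then have "f (i,j) \<le> 2" using x by simp
    then show "2 * G 1 (f (i, j)) \<le> 3 * f (i, j)" unfolding G_def by auto
  qed
  then have "2 * (\<Sum>i<6. G 1 (f (i, j))) \<le> 3 * colc f j" unfolding colc_def by (simp add: sum_distrib_left)
  then show "(\<Sum>i<6. G 1 (f (i, j))) \<le> 3" using c by simp
  assume eq: "(\<Sum>i<6. G 1 (f (i, j))) = 3"
  show "\<exists>r<6. f (r,j) = 2 \<and> (\<forall>i<6. i \<noteq> r \<longrightarrow> f (i,j) = 0)"
  proof (rule ccontr)
    assume nex: "\<not> ?thesis"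
    have no2: "f (i,j) \<noteq> 2" if "i < 6" for i
    proof
      assume f2: "f (i,j) = 2"
      have "colc f j = f (i,j) + (\<Sum>k\<in>{..<6} - {i}. f (k,j))"
        unfolding colc_def using that by (simp add: sum.remove)
      then have "(\<Sum>k\<in>{..<6} - {i}. f (k,j)) = 0" using c f2 by simp
      then have "\<forall>k<6. k \<noteq> i \<longrightarrow> f (k,j) = 0" by simp
      then show False using nex that f2 by blast
    qed
    have "G 1 (f (i, j)) = f (i,j)" if "i < 6" for i
      using x[OF that] no2[OF that] unfolding G_def by auto
    then have "(\<Sum>i<6. G 1 (f (i, j))) = colc f j" unfolding colc_def by simp
    then show False using eq c by simp
  qed
qed


lemma rot_back: fixes z n j' :: nat assumes "z < n" "j' < n" shows "(z + (j' + n - z) mod n) mod n = j'"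
proof -
  have "(z + (j' + n - z) mod n) mod n = (z + (j' + n - z)) mod n" by (simp add: mod_add_right_eq)
  also have "z + (j' + n - z) = j' + n" using assms by simp
  finally show ?thesis using assms by simp
qed

lemma dd_le2: "dd n t \<le> 2 \<Longrightarrow> t = 0 \<or> t = 1 \<or> t = 2 \<or> t = n - 2 \<or> t = n - 1"
  unfolding dd_def by (auto split: if_splits)

lemma zero_col_rows:
  assumes n: "6 \<le> n" and dom: "dom_broadcast2 (torus_V 6 n) (torus_E 6 n) f" and z: "z < n"
    and c0: "colc f z = 0" and c2: "colc f ((z + 2) mod n) = 0" and cm2: "colc f ((z + (n - 2)) mod n) = 0"
    and cR: "colc f ((z + 1) mod n) = 2" and cL: "colc f ((z + (n - 1)) mod n) = 2"
  shows "\<exists>rL rR. rL < 6 \<and> rR < 6 \<and> f (rL, (z + (n - 1)) mod n) = 2 \<and> (\<forall>i<6. i \<noteq> rL \<longrightarrow> f (i, (z + (n - 1)) mod n) = 0)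
     \<and> f (rR, (z + 1) mod n) = 2 \<and> (\<forall>i<6. i \<noteq> rR \<longrightarrow> f (i, (z + 1) mod n) = 0) \<and> rR = (rL + 3) mod 6"
proof -
  let ?L = "(z + (n - 1)) mod n" and ?R = "(z + 1) mod n"
  have f2: "f v \<le> 2" if "v \<in> torus_V 6 n" for v using dom that unfolding dom_broadcast2_def by blast
  have f2': "f (i, j) \<le> 2" if "i < 6" "j < n" for i j using f2 that torus_V_iff by simp
  have nz: "n \<noteq> 0" using n by simp
  have zerocols: "f (i, (z + t) mod n) = 0" if "t = 0 \<or> t = 2 \<or> t = n - 2" "i < 6" for i t
    using that c0 c2 cm2 z colc_zero[of f _ i] by auto
  have "6 \<le> (\<Sum>t<n. \<Sum>i'<6. G (dd n t) (f (i', (z + t) mod n)))" by (rule col_ineq_G[OF n dom z])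
  also have "\<dots> = (\<Sum>t\<in>{1, n - 1}. \<Sum>i'<6. G (dd n t) (f (i', (z + t) mod n)))"
  proof (rule sum.mono_neutral_right)
    show "{1, n - 1} \<subseteq> {..<n}" using n by auto
    show "\<forall>t\<in>{..<n} - {1, n - 1}. (\<Sum>i'<6. G (dd n t) (f (i', (z + t) mod n))) = 0"
    proof
      fix t assume t: "t \<in> {..<n} - {1, n - 1}"
      show "(\<Sum>i'<6. G (dd n t) (f (i', (z + t) mod n))) = 0"
      proof (cases "dd n t \<le> 2")
        case True
        then have "t = 0 \<or> t = 2 \<or> t = n - 2" using dd_le2 t by auto
        then show ?thesis using zerocols unfolding G_def by simp
      next
        case False
        have "G (dd n t) (f (i', (z + t) mod n)) = 0" if "i' < 6" for i'
          using False f2'[OF that, of "(z + t) mod n"] nz unfolding G_def by auto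
        then show ?thesis by simp
      qed
    qed
  qed simp
  also have "\<dots> = (\<Sum>i'<6. G 1 (f (i', ?R))) + (\<Sum>i'<6. G 1 (f (i', ?L)))"
  proof -
    have "1 \<noteq> n - 1" "dd n 1 = 1" "dd n (n - 1) = 1" using n unfolding dd_def by auto
    then show ?thesis by simp
  qed
  finally have six: "6 \<le> (\<Sum>i'<6. G 1 (f (i', ?R))) + (\<Sum>i'<6. G 1 (f (i', ?L)))" .
  have xR: "f (i, ?R) \<le> 2" if "i < 6" for i using f2' that nz by simp
  have xL: "f (i, ?L) \<le> 2" if "i < 6" for i using f2' that nz by simp
  have R3: "(\<Sum>i'<6. G 1 (f (i', ?R))) = 3" and L3: "(\<Sum>i'<6. G 1 (f (i', ?L))) = 3"
    using six heavy_G(1)[of f ?R, OF xR cR] heavy_G(1)[of f ?L, OF xL cL] by auto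
  obtain rR where rR: "rR < 6" "f (rR, ?R) = 2" "\<forall>i<6. i \<noteq> rR \<longrightarrow> f (i, ?R) = 0"
    using heavy_G(2)[of f ?R, OF xR cR R3] by blast
  obtain rL where rL: "rL < 6" "f (rL, ?L) = 2" "\<forall>i<6. i \<noteq> rL \<longrightarrow> f (i, ?L) = 0"
    using heavy_G(2)[of f ?L, OF xL cL L3] by blast
  have rows: "\<forall>i<6. near 6 1 i rL \<or> near 6 1 i rR"
  proof (intro allI impI)
    fix i :: nat assume i: "i < 6"
    have u: "(i, z) \<in> torus_V 6 n" using i z torus_V_iff by simp
    obtain v where v: "v \<in> torus_V 6 n" "0 < f v" "gdist (torus_V 6 n) (torus_E 6 n) (i, z) v \<le> f v"
      using dom u unfolding dom_broadcast2_def by blast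
    obtain i' j' where vv: "v = (i', j')" by (cases v)
    have i': "i' < 6" and j': "j' < n" using v(1) vv torus_V_iff by auto
    obtain k1 k2 where k: "k1 + k2 \<le> f v" "near 6 k1 i i'" "near n k2 z j'"
      using gdist_le_iff[of 6 n "(i, z)" v "f v"] v u n vv by auto
    define t where "t = (j' + n - z) mod n"
    have jt: "j' = (z + t) mod n" unfolding t_def using rot_back[OF z j'] by simp
    have tn: "t < n" unfolding t_def using nz by simp
    have "dd n t \<le> k2" using near_col_dd[OF n z tn] k(3) jt by simp
    moreover have "f v \<le> 2" using f2 v(1) .
    ultimately have ddt: "dd n t \<le> 2" using k(1) by simp
    have "t = 1 \<or> t = n - 1"
    proof (rule ccontr)
      assume "\<not> (t = 1 \<or> t = n - 1)"
      then have "t = 0 \<or> t = 2 \<or> t = n - 2" using dd_le2[OF ddt] by auto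
      then have "f v = 0" using zerocols[OF _ i'] vv jt by auto
      then show False using v(2) by simp
    qed
    then have "dd n t = 1" using n unfolding dd_def by auto
    then have k1: "k1 \<le> 1" using k(1) \<open>dd n t \<le> k2\<close> \<open>f v \<le> 2\<close> by simp
    show "near 6 1 i rL \<or> near 6 1 i rR"
    proof (cases "t = 1")
      case True
      then have "j' = ?R" using jt by simp
      then have "i' = rR" using rR(3) v(2) vv i' by (metis less_irrefl)
      then show ?thesis using near_mono[OF k(2) k1] by simp
    next
      case False
      then have "t = n - 1" using \<open>t = 1 \<or> t = n - 1\<close> by simp
      then have "j' = ?L" using jt by simp
      then have "i' = rL" using rL(3) v(2) vv i' by (metis less_irrefl)
      then show ?thesis using near_mono[OF k(2) k1] by simp
    qed
  qed
  have "rR = (rL + 3) mod 6" by (rule rows_opp[OF rL(1) rR(1) rows])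
  then show ?thesis using rL rR by blast
qed




lemma spec_vals: "spec (catf a) (catf b) (catf c) (catf d) (catf e) \<Longrightarrow>
   (a = 2 \<and> b = 0 \<and> c = 2 \<and> d = 0 \<and> e = 2) \<or> (a = 0 \<and> b = 2 \<and> c = 0 \<and> d = 2 \<and> e = 0)"
  unfolding spec_def catf_def by (auto split: if_splits)

lemma lower_bound:
  assumes n: "6 \<le> n" and dom: "dom_broadcast2 (torus_V 6 n) (torus_E 6 n) f"
  shows "n \<le> bcost (torus_V 6 n) f"
proof -
  have "0 \<le> (\<Sum>j<n. if spec (catf (colc f ((j+n-2) mod n))) (catf (colc f ((j+n-1) mod n))) (catf (colc f ((j+n) mod n)))
      (catf (colc f ((j+n+1) mod n))) (catf (colc f ((j+n+2) mod n))) then 0 else 1::int)"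
    by (rule sum_nonneg) simp
  then show ?thesis using lower_main[OF n dom] by simp
qed

lemma eq_case:
  assumes n: "6 \<le> n" and dom: "dom_broadcast2 (torus_V 6 n) (torus_E 6 n) f"
    and cost: "bcost (torus_V 6 n) f = n"
  shows "n mod 4 = 0"
proof -
  define c where "c j = colc f j" for j
  have nz: "n \<noteq> 0" using n by simp
  let ?w = "\<lambda>j. spec (catf (colc f ((j+n-2) mod n))) (catf (colc f ((j+n-1) mod n))) (catf (colc f ((j+n) mod n)))
      (catf (colc f ((j+n+1) mod n))) (catf (colc f ((j+n+2) mod n)))"
  have s0: "(\<Sum>j<n. if ?w j then 0 else 1::int) \<le> 0" using lower_main[OF n dom] cost by simp
  have "(\<Sum>j<n. if ?w j then 0 else 1::int) = 0"
    using s0 sum_nonneg[of "{..<n}" "\<lambda>j. if ?w j then 0 else 1::int"] by simp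
  then have "\<forall>j\<in>{..<n}. (if ?w j then 0 else 1::int) = 0"
    by (subst sum_nonneg_eq_0_iff[symmetric]) auto
  then have sp: "?w j" if "j < n" for j using that by (metis lessThan_iff one_neq_zero)
  have win: "(c ((j + (n - 2)) mod n) = 2 \<and> c ((j + (n - 1)) mod n) = 0 \<and> c j = 2 \<and> c ((j + 1) mod n) = 0 \<and> c ((j + 2) mod n) = 2)
           \<or> (c ((j + (n - 2)) mod n) = 0 \<and> c ((j + (n - 1)) mod n) = 2 \<and> c j = 0 \<and> c ((j + 1) mod n) = 2 \<and> c ((j + 2) mod n) = 0)"
    if j: "j < n" for j
  proof -
    have e: "j + n - 2 = j + (n - 2)" "j + n - 1 = j + (n - 1)" "(j + n) mod n = j"
      "(j + n + 1) mod n = (j + 1) mod n" "(j + n + 2) mod n = (j + 2) mod n"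
      using n j modn_shift[of j n 1] modn_shift[of j n 2] by auto
    show ?thesis using spec_vals[OF sp[OF j]] unfolding e c_def by simp
  qed
  have alt: "(c j = 2 \<and> c ((j + 1) mod n) = 0) \<or> (c j = 0 \<and> c ((j + 1) mod n) = 2)" if "j < n" for j
    using win[OF that] by auto
  have c0: "c 0 = 0 \<or> c 0 = 2" using alt[of 0] nz by auto
  have par: "c j = (if even j then c 0 else 2 - c 0)" if "j < n" for j
    using that
  proof (induction j)
    case 0 then show ?case by simp
  next
    case (Suc j)
    then have "c j = (if even j then c 0 else 2 - c 0)" by simp
    moreover have "(Suc j) mod n = Suc j" using Suc.prems by simp
    moreover have "(c j = 2 \<and> c (Suc j) = 0) \<or> (c j = 0 \<and> c (Suc j) = 2)"
      using alt[of j] Suc.prems \<open>(Suc j) mod n = Suc j\<close> by simp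
    ultimately show ?case using c0 by auto
  qed
  have evn: "even n"
  proof (rule ccontr)
    assume "odd n"
    then have "even (n - 1)" using nz by simp
    then have "c (n - 1) = c 0" using par[of "n-1"] nz by simp
    moreover have "(n - 1 + 1) mod n = 0" using nz by simp
    ultimately show False using alt[of "n - 1"] c0 nz by auto
  qed
  define rr where "rr j = (SOME r. r < 6 \<and> f (r, j) = 2)" for j
  have hs: "c ((j + 2) mod n) = 2 \<and> rr ((j + 2) mod n) = (rr j + 3) mod 6 \<and> rr j < 6"
    if j: "j < n" and hj: "c j = 2" for j
  proof -
    define z where "z = (j + 1) mod n"
    have z: "z < n" unfolding z_def using nz by simp
    have cz: "c z = 0" using alt[OF j] hj unfolding z_def by simp
    have wz: "c ((z + (n - 2)) mod n) = 0 \<and> c ((z + (n - 1)) mod n) = 2 \<and> c ((z + 1) mod n) = 2 \<and> c ((z + 2) mod n) = 0"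
      using win[OF z] cz by auto
    have Lz: "(z + (n - 1)) mod n = j"
    proof -
      have "(z + (n - 1)) mod n = (j + 1 + (n - 1)) mod n" unfolding z_def by (simp add: mod_add_left_eq)
      also have "j + 1 + (n - 1) = j + n" using nz by simp
      finally show ?thesis using j by simp
    qed
    have Rz: "(z + 1) mod n = (j + 2) mod n" unfolding z_def by (simp add: mod_Suc_eq)
    obtain rL rR where r: "rL < 6" "rR < 6" "f (rL, j) = 2" "\<forall>i<6. i \<noteq> rL \<longrightarrow> f (i, j) = 0"
      "f (rR, (j + 2) mod n) = 2" "\<forall>i<6. i \<noteq> rR \<longrightarrow> f (i, (j + 2) mod n) = 0" "rR = (rL + 3) mod 6"
    proof -
      have a1: "colc f z = 0" and a2: "colc f ((z + 2) mod n) = 0" and a3: "colc f ((z + (n - 2)) mod n) = 0"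
        and a4: "colc f ((z + 1) mod n) = 2" and a5: "colc f ((z + (n - 1)) mod n) = 2"
        using cz wz unfolding c_def by auto
      show ?thesis using zero_col_rows[OF n dom z a1 a2 a3 a4 a5] that unfolding Lz Rz by blast
    qed
    have u1: "rr j = rL"
      unfolding rr_def
    proof (rule some_equality)
      show "rL < 6 \<and> f (rL, j) = 2" using r by simp
      fix x assume "x < 6 \<and> f (x, j) = 2" then show "x = rL" using r(4) by force
    qed
    have u2: "rr ((j + 2) mod n) = rR"
      unfolding rr_def
    proof (rule some_equality)
      show "rR < 6 \<and> f (rR, (j + 2) mod n) = 2" using r by simp
      fix x assume "x < 6 \<and> f (x, (j + 2) mod n) = 2" then show "x = rR" using r(6) by force
    qed
    show ?thesis using wz Rz u1 u2 r by simp
  qed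
  define h0 where "h0 = (if c 0 = 2 then 0 else 1::nat)"
  have h0n: "h0 < n" unfolding h0_def using n by simp
  have ch0: "c h0 = 2" using par[of 1] c0 n unfolding h0_def by auto
  have ind: "c ((h0 + 2 * k) mod n) = 2 \<and> rr ((h0 + 2 * k) mod n) = (rr h0 + 3 * k) mod 6" for k
  proof (induction k)
    case 0 then show ?case using ch0 h0n hs[OF h0n ch0] by simp
  next
    case (Suc k)
    let ?j = "(h0 + 2 * k) mod n"
    have jn: "?j < n" using nz by simp
    have e1: "((h0 + 2 * k) mod n + 2) mod n = (h0 + 2 * k + 2) mod n" by (rule mod_add_left_eq)
    have e2: "h0 + 2 * k + 2 = h0 + 2 * Suc k" by simp
    have e: "(?j + 2) mod n = (h0 + 2 * Suc k) mod n" using e1 e2 by metis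
    have f1: "((rr h0 + 3 * k) mod 6 + 3) mod 6 = (rr h0 + 3 * k + 3) mod 6" by (rule mod_add_left_eq)
    have f2: "rr h0 + 3 * k + 3 = rr h0 + 3 * Suc k" by simp
    have "((rr h0 + 3 * k) mod 6 + 3) mod 6 = (rr h0 + 3 * Suc k) mod 6" using f1 f2 by metis
    then show ?case using hs[OF jn] Suc.IH e by simp
  qed
  have "h0 + 2 * (n div 2) = h0 + n" using evn by simp
  then have "(h0 + 2 * (n div 2)) mod n = h0" using h0n by simp
  then have eq: "rr h0 = (rr h0 + 3 * (n div 2)) mod 6" using ind[of "n div 2"] by simp
  have "rr h0 < 6" using hs[OF h0n ch0] by simp
  then have "(rr h0 + 3 * (n div 2)) mod 6 = rr h0 mod 6" using eq by simp
  then have "6 dvd (rr h0 + 3 * (n div 2)) - rr h0" using mod_eq_dvd_iff_nat[of "rr h0" "rr h0 + 3 * (n div 2)" 6] by simp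
  then have "6 dvd 3 * (n div 2)" by simp
  then have "even (n div 2)" by presburger
  then obtain q where q: "n div 2 = 2 * q" by (elim evenE)
  have "n = 2 * (n div 2)" using evn by simp
  then have "n = 4 * q" using q by simp
  then show ?thesis by simp
qed

theorem theorem4p7:
  fixes n :: nat
  assumes "n \<ge> 6"
  shows "gamma_b2 (torus_V 6 n) (torus_E 6 n) = n + (if n mod 4 = 0 then 0 else 1)"
  unfolding gamma_b2_def
proof (rule Least_equality)
  show "\<exists>f. dom_broadcast2 (torus_V 6 n) (torus_E 6 n) f \<and> bcost (torus_V 6 n) f = n + (if n mod 4 = 0 then 0 else 1)"
    using fub_dom[OF assms] fub_cost[OF assms] by blast
next
  fix y assume "\<exists>f. dom_broadcast2 (torus_V 6 n) (torus_E 6 n) f \<and> bcost (torus_V 6 n) f = y"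
  then obtain f where f: "dom_broadcast2 (torus_V 6 n) (torus_E 6 n) f" "bcost (torus_V 6 n) f = y" by blast
  have "n \<le> y" using lower_bound[OF assms f(1)] f(2) by simp
  moreover have "n mod 4 \<noteq> 0 \<Longrightarrow> y \<noteq> n" using eq_case[OF assms f(1)] f(2) by auto
  ultimately show "n + (if n mod 4 = 0 then 0 else 1) \<le> y" by auto
qed



end
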